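(* Consider the generalized Pólya urn with two agents, feedback functions $F_1(k)=k^{\beta_1}$ and $F_2(k)=e^{\beta_2k}$ with $\beta_1>1$ and $\beta_2>0$, and initial values $X_1(0),X_2(0)\in\mathbb{N}$. Then $$\mathbb{P}(N_{mon}=n\mid sMon_1)\asymp n^{-\beta_1}\log n\quad\text{as }n\to\infty.$$
   Context: $\mathbb{N}=\{1,2,\dots\}$, $e^{(i)}$ the $i$-th unit vector of $\mathbb{R}^2$. The urn $X(n)\in\mathbb{N}^2$ is a Markov chain with $\mathbb{P}(X(n+1)-X(n)=e^{(i)}\mid X(n))=F_i(X_i(n))/(F_1(X_1(n))+F_2(X_2(n)))$. $sMon_1=\{\exists N\ \forall n\ge N: X_2(n)=X_2(N)\}$. The time of monopoly is $N_{mon}=\min\{n\ge1:\exists i\in\{1,2\}\ \forall m\ge n: X(m)-X(m-1)=e^{(i)}\}$. $x_n\asymp y_n$ means $\limsup x_n/y_n<\infty$ and $\limsup y_n/x_n<\infty$. *)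

theory Defs
  imports "HOL-Probability.Probability" "HOL-Library.Landau_Symbols"
begin

definition urn_step :: "nat \<Rightarrow> nat \<times> nat \<Rightarrow> nat \<times> nat" where
  "urn_step i s = (if i = 1 then (fst s + 1, snd s) else (fst s, snd s + 1))"

definition urn_p :: "(nat \<Rightarrow> real) \<Rightarrow> (nat \<Rightarrow> real) \<Rightarrow> nat \<Rightarrow> nat \<times> nat \<Rightarrow> real" where
  "urn_p F1 F2 i s =
     (if i = 1 then F1 (fst s) else F2 (snd s)) / (F1 (fst s) + F2 (snd s))"

text \<open>X is (a realisation of) the generalized Polya urn with feedback functions F1, F2
  and initial value x0 on the probability space M: X(0) = x0 almost surely and
  X is a Markov chain with the transition probabilities above, expressed through
  the joint law of the path: for every history h(0..n) and i in {1,2},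
  P(X(0..n) = h(0..n), X(n+1) = h(n) + e^(i)) = P(X(0..n) = h(0..n)) * p_i(h(n)).\<close>
definition polya_urn ::
  "'a measure \<Rightarrow> (nat \<Rightarrow> real) \<Rightarrow> (nat \<Rightarrow> real) \<Rightarrow> nat \<times> nat \<Rightarrow> ('a \<Rightarrow> nat \<Rightarrow> nat \<times> nat) \<Rightarrow> bool"
  where
  "polya_urn M F1 F2 x0 X \<longleftrightarrow>
     prob_space M \<and>
     (\<forall>n. (\<lambda>\<omega>. X \<omega> n) \<in> measurable M (count_space UNIV)) \<and>
     (AE \<omega> in M. X \<omega> 0 = x0) \<and>
     (\<forall>n h i. i \<in> {1, 2} \<longrightarrow>
        measure M {\<omega> \<in> space M. (\<forall>k\<le>n. X \<omega> k = h k) \<and> X \<omega> (Suc n) = urn_step i (h n)}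
        = measure M {\<omega> \<in> space M. \<forall>k\<le>n. X \<omega> k = h k} * urn_p F1 F2 i (h n))"

definition sMon1 :: "'a measure \<Rightarrow> ('a \<Rightarrow> nat \<Rightarrow> nat \<times> nat) \<Rightarrow> 'a set" where
  "sMon1 M X = {\<omega> \<in> space M. \<exists>N. \<forall>n\<ge>N. snd (X \<omega> n) = snd (X \<omega> N)}"

definition mono_from :: "('a \<Rightarrow> nat \<Rightarrow> nat \<times> nat) \<Rightarrow> 'a \<Rightarrow> nat \<Rightarrow> nat \<Rightarrow> bool" where
  "mono_from X \<omega> n i \<longleftrightarrow> (\<forall>m\<ge>n. X \<omega> m = urn_step i (X \<omega> (m - 1)))"

text \<open>The event {N_mon = n}, N_mon = min{n \<ge> 1 : \<exists>i\<in>{1,2}. \<forall>m\<ge>n. X(m)-X(m-1) = e^(i)}.\<close>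
definition Nmon_eq :: "'a measure \<Rightarrow> ('a \<Rightarrow> nat \<Rightarrow> nat \<times> nat) \<Rightarrow> nat \<Rightarrow> 'a set" where
  "Nmon_eq M X n = {\<omega> \<in> space M. 1 \<le> n \<and> (\<exists>i\<in>{1,2}. mono_from X \<omega> n i) \<and>
      (\<forall>k. 1 \<le> k \<and> k < n \<longrightarrow> \<not> (\<exists>i\<in>{1,2}. mono_from X \<omega> k i))}"

definition cprob :: "'a measure \<Rightarrow> 'a set \<Rightarrow> 'a set \<Rightarrow> real" where
  "cprob M A B = measure M (A \<inter> B) / measure M B"

end

theory Submission
  imports Defs "HOL-Real_Asymp.Real_Asymp"
begin


lemma mvt_step:
  fixes \<beta> x :: real assumes b: "\<beta> > 1" and x: "x \<ge> 2"
  shows "x powr (-\<beta>) \<le> ((x - 1) powr (1 - \<beta>) - x powr (1 - \<beta>)) / (\<beta> - 1)"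
proof -
  have d: "((\<lambda>t. t powr (1 - \<beta>)) has_real_derivative (1 - \<beta>) * t powr (-\<beta>)) (at t)" if "t > 0" for t
    using has_real_derivative_powr[OF that, of "1 - \<beta>"] by simp
  have "\<exists>z. x - 1 < z \<and> z < x \<and> (x powr (1 - \<beta>) - (x - 1) powr (1 - \<beta>) = (x - (x - 1)) * ((1 - \<beta>) * z powr (- \<beta>)))"
    by (rule MVT2[where f="\<lambda>t. t powr (1 - \<beta>)"]) (use x in \<open>auto intro!: d\<close>)
  then obtain z where z: "x - 1 < z" "z < x" and eq: "x powr (1 - \<beta>) - (x - 1) powr (1 - \<beta>) = (1 - \<beta>) * z powr (- \<beta>)"
    by auto
  have "x powr (-\<beta>) \<le> z powr (-\<beta>)" using z x b by (intro powr_mono2') auto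
  then have "(\<beta> - 1) * x powr (-\<beta>) \<le> (\<beta> - 1) * z powr (-\<beta>)" using b by simp
  also have "... = (x - 1) powr (1 - \<beta>) - x powr (1 - \<beta>)" using eq by (simp add: algebra_simps)
  finally show ?thesis using b by (simp add: field_simps)
qed

lemma tail_sum:
  fixes \<beta> a :: real assumes b: "\<beta> > 1" and a: "a \<ge> 1"
  shows "(\<Sum>k<Suc n. (a + k) powr (-\<beta>)) \<le> a powr (-\<beta>) + (a powr (1 - \<beta>) - (a + n) powr (1 - \<beta>)) / (\<beta> - 1)"
proof (induction n)
  case 0 then show ?case by simp
next
  case (Suc n)
  have "(\<Sum>k<Suc (Suc n). (a + k) powr (-\<beta>)) = (\<Sum>k<Suc n. (a + k) powr (-\<beta>)) + (a + Suc n) powr (-\<beta>)"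
    by simp
  also have "(a + Suc n) powr (-\<beta>) \<le> ((a + Suc n - 1) powr (1 - \<beta>) - (a + Suc n) powr (1 - \<beta>)) / (\<beta> - 1)"
    using a by (intro mvt_step b) auto
  also have "a + Suc n - 1 = a + n" by simp
  finally show ?case using Suc by (simp add: diff_divide_distrib)
qed

lemma tail_bound:
  fixes \<beta> a :: real assumes b: "\<beta> > 1" and a: "a \<ge> 1"
  shows "(\<Sum>k<(n::nat). (a + k) powr (-\<beta>)) \<le> \<beta> / (\<beta> - 1) * a powr (1 - \<beta>)"
proof (cases n)
  case 0 then show ?thesis using b a by simp
next
  case (Suc m)
  have "(\<Sum>k<n. (a + k) powr (-\<beta>)) \<le> a powr (-\<beta>) + (a powr (1 - \<beta>) - (a + m) powr (1 - \<beta>)) / (\<beta> - 1)"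
    unfolding Suc by (rule tail_sum[OF b a])
  also have "... \<le> a powr (1 - \<beta>) + a powr (1 - \<beta>) / (\<beta> - 1)"
  proof (intro add_mono divide_right_mono)
    show "a powr (-\<beta>) \<le> a powr (1 - \<beta>)" using a by (intro powr_mono) auto
  qed (use b in auto)
  also have "... = \<beta> / (\<beta> - 1) * a powr (1 - \<beta>)" using b by (simp add: field_simps)
  finally show ?thesis .
qed

lemma geo_bound: fixes r :: real assumes "0 \<le> r" "r < 1" shows "(\<Sum>k<n. r ^ k) \<le> 1 / (1 - r)"
proof -
  have "(\<Sum>k<n. r ^ k) = (1 - r ^ n) / (1 - r)" using assms by (simp add: sum_gp_strict)
  also have "... \<le> 1 / (1 - r)" using assms by (intro divide_right_mono) auto
  finally show ?thesis .
qed


lemma frac_mono: fixes x x' y :: real assumes "0 \<le> x" "x \<le> x'" "y > 0"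
  shows "x / (x + y) \<le> x' / (x' + y)"
proof -
  have "x * (x' + y) \<le> x' * (x + y)"
    using mult_right_mono[OF assms(2), of y] assms by (simp add: algebra_simps)
  then show ?thesis using assms by (simp add: divide_simps)
qed

lemma inv_1p_le: "(y::real) > 0 \<Longrightarrow> 1 / (1 + y) \<le> 1 / y"
  by (intro divide_left_mono) auto

lemma frac1: assumes "x > 0" "y > 0" shows "(x + y) / (x * y) * (x / (x + y)) = 1 / (y::real)"
proof -
  have "(x + y) / (x * y) * (x / (x + y)) = ((x + y) * x) / ((x + y) * (x * y))" by simp
  also have "... = x / (x * y)" using assms by (intro mult_divide_mult_cancel_left) simp
  also have "... = 1 / y" using assms by simp
  finally show ?thesis .
qed

lemma frac2: assumes "x > 0" "y > 0" shows "(x + y) / (x * y) * (y / (x + y)) = 1 / (x::real)"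
  using frac1[OF assms(2,1)] by (simp add: add.commute mult.commute)

locale urn =
  fixes M :: "'a measure" and X :: "'a \<Rightarrow> nat \<Rightarrow> nat \<times> nat"
    and \<beta>1 \<beta>2 :: real and st0 :: "nat \<times> nat"
  assumes b1: "\<beta>1 > 1" and b2: "\<beta>2 > 0"
    and a0pos: "fst st0 \<ge> 1" and b0pos: "snd st0 \<ge> 1"
    and pu: "polya_urn M (\<lambda>k. real k powr \<beta>1) (\<lambda>k. exp (\<beta>2 * real k)) st0 X"
begin

definition F1 :: "nat \<Rightarrow> real" where "F1 k = real k powr \<beta>1"
definition F2 :: "nat \<Rightarrow> real" where "F2 k = exp (\<beta>2 * real k)"
definition p :: "nat \<Rightarrow> nat \<times> nat \<Rightarrow> real" where "p i s = urn_p F1 F2 i s"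

lemma PS: "prob_space M" using pu unfolding polya_urn_def by auto
lemma Xmeas[measurable]: "(\<lambda>\<omega>. X \<omega> n) \<in> measurable M (count_space UNIV)"
  using pu unfolding polya_urn_def by auto
lemma X0: "AE \<omega> in M. X \<omega> 0 = st0" using pu unfolding polya_urn_def by auto
lemma step: "i \<in> {1,2} \<Longrightarrow>
        measure M {\<omega> \<in> space M. (\<forall>k\<le>n. X \<omega> k = h k) \<and> X \<omega> (Suc n) = urn_step i (h n)}
        = measure M {\<omega> \<in> space M. \<forall>k\<le>n. X \<omega> k = h k} * p i (h n)"
  using pu unfolding polya_urn_def p_def F1_def[abs_def] F2_def[abs_def] by blast

lemma Xsnd[measurable]: "(\<lambda>\<omega>. snd (X \<omega> n)) \<in> measurable M (count_space UNIV)"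
  by (rule measurable_compose[where g=snd, OF Xmeas]) simp
lemma Xfst[measurable]: "(\<lambda>\<omega>. fst (X \<omega> n)) \<in> measurable M (count_space UNIV)"
  by (rule measurable_compose[where g=fst, OF Xmeas]) simp
lemma test0: "{\<omega>\<in>space M. snd (X \<omega> n) = snd (X \<omega> N)} \<in> sets M"
proof -
  have "{\<omega>\<in>space M. snd (X \<omega> n) = snd (X \<omega> N)} = (\<Union>v. {\<omega>\<in>space M. snd (X \<omega> n) = v} \<inter> {\<omega>\<in>space M. snd (X \<omega> N) = v})"
    by auto
  also have "... \<in> sets M" by measurable
  finally show ?thesis .
qed
lemma test1: "{\<omega> \<in> space M. \<exists>N. \<forall>n\<ge>N. snd (X \<omega> n) = snd (X \<omega> N)} \<in> sets M"
proof -
  have "{\<omega> \<in> space M. \<exists>N. \<forall>n\<ge>N. snd (X \<omega> n) = snd (X \<omega> N)} = (\<Union>N. \<Inter>n\<in>{N..}. {\<omega>\<in>space M. snd (X \<omega> n) = snd (X \<omega> N)})"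
    by auto
  also have "... \<in> sets M" using test0 by (intro sets.countable_UN sets.countable_INT') auto
  finally show ?thesis .
qed

lemma Ssets: "{\<omega> \<in> space M. \<exists>N. \<forall>n\<ge>N. snd (X \<omega> n) = snd (X \<omega> N)} \<in> sets M"
  by (rule test1)

definition pth :: "nat list \<Rightarrow> nat \<Rightarrow> nat \<times> nat" where
  "pth cs k = fold urn_step (take k cs) st0"
fun Prf :: "nat \<times> nat \<Rightarrow> nat list \<Rightarrow> real" where
  "Prf s [] = 1"
| "Prf s (i # cs) = p i s * Prf (urn_step i s) cs"
definition Ev :: "nat list \<Rightarrow> 'a set" where
  "Ev cs = {\<omega>\<in>space M. \<forall>k\<le>length cs. X \<omega> k = pth cs k}"
definition Ls :: "nat \<Rightarrow> nat list set" where
  "Ls n = {cs. set cs \<subseteq> {1,2} \<and> length cs = n}"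

lemma Prf_append: "Prf s (cs @ ds) = Prf s cs * Prf (fold urn_step cs s) ds"
  by (induction cs arbitrary: s) auto

lemma Prf_snoc: "Prf s (cs @ [i]) = Prf s cs * p i (fold urn_step cs s)"
  by (simp add: Prf_append)

lemma pth_snoc: "k \<le> length cs \<Longrightarrow> pth (cs @ [i]) k = pth cs k"
  unfolding pth_def by simp

lemma pth_len: "pth cs (length cs) = fold urn_step cs st0"
  unfolding pth_def by simp

lemma pth_Suc: "k < length cs \<Longrightarrow> pth cs (Suc k) = urn_step (cs ! k) (pth cs k)"
  unfolding pth_def by (simp add: take_Suc_conv_app_nth)

lemma Ev_sets[measurable]: "Ev cs \<in> sets M"
  unfolding Ev_def by measurable

lemma F1_nonneg: "F1 k \<ge> 0" unfolding F1_def by simp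
lemma F2_pos: "F2 k > 0" unfolding F2_def by simp

lemma p_sum: "p 1 s + p 2 s = 1"
proof -
  have "F1 (fst s) + F2 (snd s) > 0" using F1_nonneg F2_pos add_nonneg_pos by blast
  then have "F1 (fst s) / (F1 (fst s) + F2 (snd s)) + F2 (snd s) / (F1 (fst s) + F2 (snd s)) = 1"
    by (simp add: add_divide_distrib[symmetric])
  then show ?thesis unfolding p_def urn_p_def by simp
qed

lemma p_sum': "p (Suc 0) s + p 2 s = 1" using p_sum by simp

lemma p_nonneg: "p i s \<ge> 0"
  unfolding p_def urn_p_def using F1_nonneg F2_pos
  by (auto intro!: divide_nonneg_pos add_nonneg_pos simp: less_imp_le)

lemma measure_Ev: "set cs \<subseteq> {1,2} \<Longrightarrow> measure M (Ev cs) = Prf st0 cs"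
proof (induction cs rule: rev_induct)
  case Nil
  have "Ev [] = {\<omega>\<in>space M. X \<omega> 0 = st0}" unfolding Ev_def pth_def by auto
  moreover have "prob_space.prob M {\<omega>\<in>space M. X \<omega> 0 = st0} = 1"
    using prob_space.prob_Collect_eq_1[OF PS, of "\<lambda>\<omega>. X \<omega> 0 = st0"] X0 by simp
  ultimately show ?case by simp
next
  case (snoc i cs)
  let ?n = "length cs"
  have i: "i \<in> {1,2}" using snoc.prems by auto
  have "Ev (cs @ [i]) = {\<omega> \<in> space M. (\<forall>k\<le>?n. X \<omega> k = pth cs k) \<and> X \<omega> (Suc ?n) = urn_step i (pth cs ?n)}"
  proof -
    have "pth (cs @ [i]) (Suc ?n) = urn_step i (pth cs ?n)"
      using pth_len[of "cs @ [i]"] pth_len[of cs] by simp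
    then show ?thesis unfolding Ev_def using pth_snoc[of _ cs i]
      by (auto simp: le_Suc_eq)
  qed
  also have "measure M ... = measure M {\<omega> \<in> space M. \<forall>k\<le>?n. X \<omega> k = pth cs k} * p i (pth cs ?n)"
    by (rule step[OF i])
  also have "... = Prf st0 cs * p i (pth cs ?n)"
    using snoc by (simp add: Ev_def)
  also have "... = Prf st0 (cs @ [i])" by (simp add: Prf_snoc pth_len)
  finally show ?case .
qed

lemma finite_Ls: "finite (Ls n)"
  unfolding Ls_def by (rule finite_lists_length_eq) simp

lemma Ls_Suc: "Ls (Suc n) = (\<lambda>(cs,i). cs @ [i]) ` (Ls n \<times> {1,2})"
proof
  show "Ls (Suc n) \<subseteq> (\<lambda>(cs,i). cs @ [i]) ` (Ls n \<times> {1,2})"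
  proof
    fix cs assume "cs \<in> Ls (Suc n)"
    then have "cs \<noteq> []" and "set cs \<subseteq> {1,2}" "length cs = Suc n" unfolding Ls_def by auto
    then obtain ds i where "cs = ds @ [i]" by (metis rev_exhaust)
    with \<open>set cs \<subseteq> {1,2}\<close> \<open>length cs = Suc n\<close> show "cs \<in> (\<lambda>(cs,i). cs @ [i]) ` (Ls n \<times> {1,2})"
      unfolding Ls_def by (auto intro!: image_eqI[where x="(ds,i)"])
  qed
qed (auto simp: Ls_def)

lemma sum_Ls_Suc: "(\<Sum>cs\<in>Ls (Suc n). f cs) = (\<Sum>cs\<in>Ls n. f (cs @ [1]) + f (cs @ [2]))"
proof -
  have inj: "inj_on (\<lambda>(cs,i). cs @ [i]) (Ls n \<times> {1::nat,2})"
    by (auto simp: inj_on_def)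
  have "(\<Sum>cs\<in>Ls (Suc n). f cs) = (\<Sum>x\<in>Ls n \<times> {1,2}. f ((\<lambda>(cs,i). cs @ [i]) x))"
    unfolding Ls_Suc by (rule sum.reindex[OF inj, unfolded comp_def])
  also have "... = (\<Sum>cs\<in>Ls n. \<Sum>i\<in>{1::nat,2}. f (cs @ [i]))"
    by (subst sum.cartesian_product) (simp add: case_prod_beta)
  also have "... = (\<Sum>cs\<in>Ls n. f (cs @ [1]) + f (cs @ [2]))" by simp
  finally show ?thesis .
qed

lemma sum_Prf: "(\<Sum>cs\<in>Ls n. Prf st0 cs) = 1"
proof (induction n)
  case 0
  have "Ls 0 = {[]}" unfolding Ls_def by auto
  then show ?case by simp
next
  case (Suc n)
  have "(\<Sum>cs\<in>Ls (Suc n). Prf st0 cs) = (\<Sum>cs\<in>Ls n. Prf st0 cs * (p 1 (fold urn_step cs st0) + p 2 (fold urn_step cs st0)))"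
    unfolding sum_Ls_Suc by (simp add: Prf_snoc distrib_left)
  also have "... = 1" using Suc by (simp add: p_sum p_sum')
  finally show ?case .
qed

lemma urn_step_inj: "i \<in> {1,2} \<Longrightarrow> j \<in> {1,2} \<Longrightarrow> urn_step i s = urn_step j s \<Longrightarrow> i = j"
  unfolding urn_step_def by (auto split: if_splits)

lemma pth_inj:
  assumes "cs \<in> Ls n" "ds \<in> Ls n" "\<forall>k\<le>n. pth cs k = pth ds k"
  shows "cs = ds"
proof (rule nth_equalityI)
  show "length cs = length ds" using assms by (simp add: Ls_def)
  fix k assume k: "k < length cs"
  have n: "length cs = n" "length ds = n" using assms by (auto simp: Ls_def)
  have "urn_step (cs ! k) (pth cs k) = urn_step (ds ! k) (pth ds k)"
    using pth_Suc[of k cs] pth_Suc[of k ds] k n assms(3) by (metis Suc_leI less_imp_le)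
  then have E: "urn_step (cs ! k) (pth cs k) = urn_step (ds ! k) (pth cs k)"
    using assms(3) k n by simp
  have "cs ! k \<in> set cs" "ds ! k \<in> set ds" using k n by auto
  moreover have "set cs \<subseteq> {1,2}" "set ds \<subseteq> {1,2}" using assms unfolding Ls_def by auto
  ultimately have "cs ! k \<in> {1,2}" "ds ! k \<in> {1,2}" by blast+
  then show "cs ! k = ds ! k" using urn_step_inj E by metis
qed

lemma Ev_disj: "disjoint_family_on Ev (Ls n)"
  unfolding disjoint_family_on_def
proof (intro ballI impI)
  fix cs ds assume "cs \<in> Ls n" "ds \<in> Ls n" "cs \<noteq> ds"
  then show "Ev cs \<inter> Ev ds = {}"
    using pth_inj[of cs n ds] unfolding Ev_def Ls_def by auto
qed

lemma measure_V: "measure M (\<Union>cs\<in>Ls n. Ev cs) = 1"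
proof -
  interpret prob_space M by (rule PS)
  have "measure M (\<Union>cs\<in>Ls n. Ev cs) = (\<Sum>cs\<in>Ls n. measure M (Ev cs))"
    by (rule measure_finite_Union[OF finite_Ls]) (auto intro: Ev_disj emeasure_finite)
  also have "... = (\<Sum>cs\<in>Ls n. Prf st0 cs)" by (intro sum.cong refl measure_Ev) (auto simp: Ls_def)
  finally show ?thesis using sum_Prf by simp
qed

lemma decomp:
  assumes A: "A \<in> sets M"
  shows "measure M A = (\<Sum>cs\<in>Ls n. measure M (A \<inter> Ev cs))"
proof -
  let ?V = "\<Union>cs\<in>Ls n. Ev cs"
  have V: "?V \<in> sets M" using finite_Ls by auto
  interpret prob_space M by (rule PS)
  have "measure M (A - ?V) \<le> measure M (space M - ?V)"
    using A V sets.sets_into_space[OF A] by (intro finite_measure_mono) auto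
  also have "... = 0" using prob_compl[OF V] measure_V by simp
  finally have "measure M (A - ?V) = 0" using measure_nonneg[of M "A - ?V"] by linarith
  then have "measure M A = measure M (A \<inter> ?V)"
    using finite_measure_Diff'[OF A V] by (simp add: Int_commute)
  also have "A \<inter> ?V = (\<Union>cs\<in>Ls n. A \<inter> Ev cs)" by blast
  also have "measure M ... = (\<Sum>cs\<in>Ls n. measure M (A \<inter> Ev cs))"
    using Ev_disj[of n] A
    by (intro measure_finite_Union[OF finite_Ls]) (auto simp: disjoint_family_on_def intro: emeasure_finite)
  finally show ?thesis .
qed

definition S1 :: "nat \<Rightarrow> 'a set" where
  "S1 j = {\<omega>\<in>space M. X \<omega> (Suc j) = urn_step 1 (X \<omega> j)}"

lemma S1_sets[measurable]: "S1 j \<in> sets M"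
proof -
  have "S1 j = (\<Union>v. {\<omega>\<in>space M. X \<omega> (Suc j) = urn_step 1 v} \<inter> {\<omega>\<in>space M. X \<omega> j = v})"
    unfolding S1_def by auto
  also have "... \<in> sets M" by measurable
  finally show ?thesis .
qed

definition G :: "nat \<Rightarrow> nat \<Rightarrow> 'a set" where
  "G m L = (space M - S1 m) \<inter> (\<Inter>j\<in>{Suc m..Suc m + L}. S1 j)"
definition Ginf :: "nat \<Rightarrow> 'a set" where
  "Ginf m = (space M - S1 m) \<inter> (\<Inter>j\<in>{Suc m..}. S1 j)"

lemma G_sets: "G m L \<in> sets M" unfolding G_def by auto
lemma Ginf_sets: "Ginf m \<in> sets M" unfolding Ginf_def by auto

lemma S1_Ev: assumes "cs \<in> Ls n" "j < n" "\<omega> \<in> Ev cs"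
  shows "\<omega> \<in> S1 j \<longleftrightarrow> cs ! j = 1"
proof -
  have n: "length cs = n" using assms by (simp add: Ls_def)
  have "cs ! j \<in> set cs" using assms n by auto
  moreover have "set cs \<subseteq> {1,2}" using assms by (auto simp: Ls_def)
  ultimately have cj: "cs ! j \<in> {1,2}" by blast
  have sp: "\<omega> \<in> space M" and X: "X \<omega> (Suc j) = pth cs (Suc j)" "X \<omega> j = pth cs j"
    using assms n unfolding Ev_def by auto
  have "\<omega> \<in> S1 j \<longleftrightarrow> urn_step (cs ! j) (pth cs j) = urn_step 1 (pth cs j)"
    unfolding S1_def using sp X pth_Suc[of j cs] assms n by auto
  also have "... \<longleftrightarrow> cs ! j = 1" using urn_step_inj[OF cj, of 1 "pth cs j"] by auto
  finally show ?thesis .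
qed

lemma fold_props: "fst (fold urn_step cs s) + snd (fold urn_step cs s) = fst s + snd s + length cs
   \<and> fst (fold urn_step cs s) \<ge> fst s \<and> snd (fold urn_step cs s) \<ge> snd s"
proof (induction cs arbitrary: s)
  case (Cons a cs)
  from Cons.IH[of "urn_step a s"] show ?case by (auto simp: urn_step_def)
qed simp

lemma Prf_rep: "Prf s (replicate n 1) = (\<Prod>k<n. p 1 (fst s + k, snd s))"
proof (induction n arbitrary: s)
  case (Suc n)
  have "Prf s (replicate (Suc n) 1) = p 1 s * Prf (fst s + 1, snd s) (replicate n 1)"
    by (simp add: urn_step_def)
  also have "... = p 1 s * (\<Prod>k<n. p 1 (fst s + 1 + k, snd s))" using Suc by simp
  also have "... = (\<Prod>k<Suc n. p 1 (fst s + k, snd s))"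
    by (subst prod.lessThan_Suc_shift) simp
  finally show ?case .
qed simp

definition Q :: "nat \<Rightarrow> nat \<Rightarrow> nat \<Rightarrow> real" where
  "Q L a c = (\<Prod>k<Suc L. p 1 (a + k, c))"

definition gL :: "nat \<Rightarrow> nat \<times> nat \<Rightarrow> real" where
  "gL L s = p 2 s * Q L (fst s) (snd s + 1)"

lemma measure_G: "measure M (G m L) = (\<Sum>ds\<in>Ls m. Prf st0 ds * gL L (fold urn_step ds st0))"
proof -
  let ?n = "Suc (Suc m) + L"
  let ?C = "\<lambda>cs. cs ! m = 2 \<and> (\<forall>j\<in>{Suc m..Suc m + L}. cs ! j = 1)"
  have "measure M (G m L) = (\<Sum>cs\<in>Ls ?n. measure M (G m L \<inter> Ev cs))"
    by (rule decomp[OF G_sets])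
  also have "... = (\<Sum>cs\<in>Ls ?n. if ?C cs then Prf st0 cs else 0)"
  proof (intro sum.cong refl)
    fix cs assume cs: "cs \<in> Ls ?n"
    have "G m L \<inter> Ev cs = (if ?C cs then Ev cs else {})"
    proof -
      have "cs ! m \<in> set cs" using cs by (auto simp: Ls_def)
      moreover have "set cs \<subseteq> {1,2}" using cs by (auto simp: Ls_def)
      ultimately have cm: "cs ! m \<in> {1,2}" by blast
      have "\<omega> \<in> G m L \<longleftrightarrow> ?C cs" if "\<omega> \<in> Ev cs" for \<omega>
      proof -
        have sp: "\<omega> \<in> space M" using that by (simp add: Ev_def)
        have "\<omega> \<in> G m L \<longleftrightarrow> \<not> cs ! m = 1 \<and> (\<forall>j\<in>{Suc m..Suc m + L}. cs ! j = 1)"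
          unfolding G_def using S1_Ev[OF cs _ that] sp by auto
        also have "... \<longleftrightarrow> ?C cs" using cm by auto
        finally show ?thesis .
      qed
      then show ?thesis by auto
    qed
    then show "measure M (G m L \<inter> Ev cs) = (if ?C cs then Prf st0 cs else 0)"
      using measure_Ev cs by (auto simp: Ls_def)
  qed
  also have "... = (\<Sum>cs\<in>{cs\<in>Ls ?n. ?C cs}. Prf st0 cs)"
    by (simp add: sum.inter_filter[OF finite_Ls])
  also have "{cs\<in>Ls ?n. ?C cs} = (\<lambda>ds. ds @ 2 # replicate (Suc L) 1) ` Ls m"
  proof
    show "(\<lambda>ds. ds @ 2 # replicate (Suc L) 1) ` Ls m \<subseteq> {cs\<in>Ls ?n. ?C cs}"
    proof
      fix cs assume "cs \<in> (\<lambda>ds. ds @ 2 # replicate (Suc L) 1) ` Ls m"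
      then obtain ds where ds: "ds \<in> Ls m" "cs = ds @ 2 # replicate (Suc L) 1" by auto
      have l: "length ds = m" using ds by (simp add: Ls_def)
      have "cs ! j = 1" if "j\<in>{Suc m..Suc m + L}" for j
      proof -
        have "cs ! j = (2 # replicate (Suc L) 1) ! (j - m)" using ds l that by (simp add: nth_append)
        also have "... = replicate (Suc L) 1 ! (j - Suc m)" using that by (simp add: Suc_diff_Suc)
        also have "... = 1" using that by (intro nth_replicate) auto
        finally show ?thesis .
      qed
      then show "cs \<in> {cs\<in>Ls ?n. ?C cs}" using ds l by (auto simp: Ls_def nth_append)
    qed
  next
    show "{cs\<in>Ls ?n. ?C cs} \<subseteq> (\<lambda>ds. ds @ 2 # replicate (Suc L) 1) ` Ls m"
    proof
      fix cs assume cs: "cs \<in> {cs\<in>Ls ?n. ?C cs}"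
      then have l: "length cs = ?n" and sc: "set cs \<subseteq> {1,2}" by (auto simp: Ls_def)
      have "drop (Suc m) cs = replicate (Suc L) 1"
      proof (rule nth_equalityI)
        show "length (drop (Suc m) cs) = length (replicate (Suc L) (1::nat))" using l by simp
        fix i assume "i < length (drop (Suc m) cs)"
        then have i: "i < Suc L" using l by simp
        have "drop (Suc m) cs ! i = cs ! (Suc m + i)" using l i by (simp add: nth_drop)
        also have "... = 1" using cs i by auto
        also have "... = replicate (Suc L) 1 ! i" using i by (simp only: nth_replicate)
        finally show "drop (Suc m) cs ! i = replicate (Suc L) 1 ! i" .
      qed
      moreover have "cs = take m cs @ cs ! m # drop (Suc m) cs"
        using l by (simp add: id_take_nth_drop)
      ultimately have "cs = take m cs @ 2 # replicate (Suc L) 1" using cs by simp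
      moreover have "take m cs \<in> Ls m" using l sc set_take_subset[of m cs] by (auto simp: Ls_def)
      ultimately show "cs \<in> (\<lambda>ds. ds @ 2 # replicate (Suc L) 1) ` Ls m" by blast
    qed
  qed
  also have "(\<Sum>cs\<in>(\<lambda>ds. ds @ 2 # replicate (Suc L) 1) ` Ls m. Prf st0 cs)
     = (\<Sum>ds\<in>Ls m. Prf st0 (ds @ 2 # replicate (Suc L) 1))"
    by (rule sum.reindex_cong[where l="\<lambda>ds. ds @ 2 # replicate (Suc L) 1"]) (auto simp: inj_on_def)
  also have "... = (\<Sum>ds\<in>Ls m. Prf st0 ds * gL L (fold urn_step ds st0))"
  proof (intro sum.cong refl)
    fix ds
    let ?e = "fold urn_step ds st0"
    have "Prf st0 (ds @ 2 # replicate (Suc L) 1) = Prf st0 ds * (p 2 ?e * Prf (urn_step 2 ?e) (replicate (Suc L) 1))"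
      by (simp add: Prf_append)
    also have "Prf (urn_step 2 ?e) (replicate (Suc L) 1) = Q L (fst ?e) (snd ?e + 1)"
      unfolding Prf_rep Q_def by (simp add: urn_step_def)
    finally show "Prf st0 (ds @ 2 # replicate (Suc L) 1) = Prf st0 ds * gL L ?e"
      by (simp add: gL_def)
  qed
  finally show ?thesis .
qed

abbreviation "a0 \<equiv> fst st0"
abbreviation "b0 \<equiv> snd st0"

definition u :: "nat \<times> nat \<Rightarrow> real" where
  "u s = (\<Sum>ds\<in>{ds\<in>Ls (fst s + snd s - a0 - b0). fold urn_step ds st0 = s}. Prf st0 ds)"

lemma level_sum:
  "(\<Sum>ds\<in>Ls m. Prf st0 ds * g (fold urn_step ds st0))
     = (\<Sum>j\<le>m. u (a0 + (m - j), b0 + j) * g (a0 + (m - j), b0 + j))"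
proof -
  let ?E = "\<lambda>ds. fold urn_step ds st0"
  let ?s = "\<lambda>j. (a0 + (m - j), b0 + j)"
  have img: "?E ` Ls m \<subseteq> ?s ` {..m}"
  proof
    fix y assume "y \<in> ?E ` Ls m"
    then obtain ds where ds: "ds \<in> Ls m" "y = ?E ds" by auto
    have "fst y + snd y = a0 + b0 + m" "fst y \<ge> a0" "snd y \<ge> b0"
      using fold_props[of ds st0] ds by (auto simp: Ls_def)
    then have "y = ?s (snd y - b0)" "snd y - b0 \<le> m"
      by (cases y; auto)+
    then show "y \<in> ?s ` {..m}" by blast
  qed
  have "(\<Sum>ds\<in>Ls m. Prf st0 ds * g (?E ds))
      = (\<Sum>y\<in>?s ` {..m}. \<Sum>ds\<in>{ds. ds \<in> Ls m \<and> ?E ds = y}. Prf st0 ds * g (?E ds))"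
    by (rule sum.group[OF finite_Ls _ img, symmetric]) simp
  also have "... = (\<Sum>j\<le>m. \<Sum>ds\<in>{ds. ds \<in> Ls m \<and> ?E ds = ?s j}. Prf st0 ds * g (?E ds))"
    by (rule sum.reindex_cong[where l="?s"]) (auto simp: inj_on_def)
  also have "... = (\<Sum>j\<le>m. u (?s j) * g (?s j))"
  proof (intro sum.cong refl)
    fix j assume j: "j \<in> {..m}"
    have lev: "fst (?s j) + snd (?s j) - a0 - b0 = m" using j by auto
    have "(\<Sum>ds\<in>{ds. ds \<in> Ls m \<and> ?E ds = ?s j}. Prf st0 ds * g (?E ds))
        = (\<Sum>ds\<in>{ds. ds \<in> Ls m \<and> ?E ds = ?s j}. Prf st0 ds * g (?s j))"
      by (intro sum.cong refl) auto
    also have "... = u (?s j) * g (?s j)"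
      unfolding u_def lev by (simp add: sum_distrib_right)
    finally show "(\<Sum>ds\<in>{ds. ds \<in> Ls m \<and> ?E ds = ?s j}. Prf st0 ds * g (?E ds)) = u (?s j) * g (?s j)" .
  qed
  finally show ?thesis .
qed

lemma u_zero: assumes "fst s < a0 \<or> snd s < b0" shows "u s = 0"
proof -
  have "fold urn_step ds st0 \<noteq> s" for ds
    using fold_props[of ds st0] assms by auto
  then show ?thesis unfolding u_def by simp
qed

lemma u_st0: "u st0 = 1"
proof -
  have "{ds\<in>Ls (fst st0 + snd st0 - a0 - b0). fold urn_step ds st0 = st0} = {[]}" unfolding Ls_def by auto
  then show ?thesis unfolding u_def by simp
qed

lemma u_rec:
  assumes "a \<ge> 1" "b \<ge> 1" "a + b = a0 + b0 + Suc m"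
  shows "u (a, b) = u (a - 1, b) * p 1 (a - 1, b) + u (a, b - 1) * p 2 (a, b - 1)"
proof -
  let ?E = "\<lambda>ds. fold urn_step ds st0"
  have l1: "a + b - a0 - b0 = Suc m" "a - Suc 0 + b - (a0 + b0) = m" "a + (b - Suc 0) - (a0 + b0) = m"
    using assms by auto
  have "u (a, b) = (\<Sum>ds\<in>Ls (Suc m). if ?E ds = (a, b) then Prf st0 ds else 0)"
    unfolding u_def using l1 by (simp add: sum.inter_filter[OF finite_Ls])
  also have "... = (\<Sum>ds\<in>Ls m. (if ?E ds = (a - 1, b) then Prf st0 ds else 0) * p 1 (a - 1, b)
                + (if ?E ds = (a, b - 1) then Prf st0 ds else 0) * p 2 (a, b - 1))"
    unfolding sum_Ls_Suc
  proof (intro sum.cong refl)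
    fix ds
    have e1: "urn_step 1 (?E ds) = (a, b) \<longleftrightarrow> ?E ds = (a - 1, b)"
      using assms by (cases "?E ds") (auto simp: urn_step_def)
    have e2: "urn_step 2 (?E ds) = (a, b) \<longleftrightarrow> ?E ds = (a, b - 1)"
      using assms by (cases "?E ds") (auto simp: urn_step_def)
    show "(if ?E (ds @ [1]) = (a, b) then Prf st0 (ds @ [1]) else 0) +
          (if ?E (ds @ [2]) = (a, b) then Prf st0 (ds @ [2]) else 0) =
          (if ?E ds = (a - 1, b) then Prf st0 ds else 0) * p 1 (a - 1, b) +
          (if ?E ds = (a, b - 1) then Prf st0 ds else 0) * p 2 (a, b - 1)"
      using e1 e2 by (auto simp: Prf_snoc)
  qed
  also have "... = u (a - 1, b) * p 1 (a - 1, b) + u (a, b - 1) * p 2 (a, b - 1)"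
    unfolding u_def sum.distrib sum_distrib_right[symmetric]
    by (simp add: sum.inter_filter[OF finite_Ls] l1)
  finally show ?thesis .
qed

lemma F1_pos: "k \<ge> 1 \<Longrightarrow> F1 k > 0" unfolding F1_def by simp

definition W :: "nat \<Rightarrow> nat \<Rightarrow> real" where
  "W i j = 1 / F1 (a0 + i) + 1 / F2 (b0 + j)"
definition P1 :: "nat \<Rightarrow> nat \<Rightarrow> real" where "P1 i j = p 1 (a0 + i, b0 + j)"
definition P2 :: "nat \<Rightarrow> nat \<Rightarrow> real" where "P2 i j = p 2 (a0 + i, b0 + j)"

fun Pi :: "nat \<Rightarrow> nat \<Rightarrow> real" where
  "Pi 0 0 = 1"
| "Pi (Suc i) 0 = P1 (Suc i) 0 * Pi i 0"
| "Pi 0 (Suc j) = P2 0 (Suc j) * Pi 0 j"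
| "Pi (Suc i) (Suc j) = P1 (Suc i) (Suc j) * Pi i (Suc j) + P2 (Suc i) (Suc j) * Pi (Suc i) j"

lemma WP1: "W i j * P1 i j = 1 / F2 (b0 + j)"
proof -
  have f1: "F1 (a0 + i) > 0" using F1_pos a0pos by simp
  have f2: "F2 (b0 + j) > 0" using F2_pos by simp
  have W: "W i j = (F1 (a0 + i) + F2 (b0 + j)) / (F1 (a0 + i) * F2 (b0 + j))"
    unfolding W_def add_divide_distrib using f1 f2 by simp
  have "F1 (a0 + i) + F2 (b0 + j) > 0" using f1 f2 by simp
  then show ?thesis unfolding W P1_def p_def urn_p_def using frac1[OF f1 f2] by simp
qed

lemma WP2: "W i j * P2 i j = 1 / F1 (a0 + i)"
proof -
  have f1: "F1 (a0 + i) > 0" using F1_pos a0pos by simp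
  have f2: "F2 (b0 + j) > 0" using F2_pos by simp
  have W: "W i j = (F1 (a0 + i) + F2 (b0 + j)) / (F1 (a0 + i) * F2 (b0 + j))"
    unfolding W_def add_divide_distrib using f1 f2 by simp
  have "F1 (a0 + i) + F2 (b0 + j) > 0" using f1 f2 by simp
  then show ?thesis unfolding W P2_def p_def urn_p_def using frac2[OF f1 f2] by simp
qed

lemma u_W: "u (a0 + i, b0 + j) = W i j * Pi i j / W 0 0"
proof (induction i j rule: Pi.induct)
  case 1
  have "W 0 0 > 0" unfolding W_def using F1_pos[of a0] F2_pos[of b0] a0pos by (simp add: add_pos_pos)
  then show ?case using u_st0 by simp
next
  case (2 i)
  have "u (a0 + Suc i, b0) = u (a0 + i, b0) * P1 i 0 + u (a0 + Suc i, b0 - 1) * p 2 (a0 + Suc i, b0 - 1)"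
    using u_rec[of "a0 + Suc i" b0 i] a0pos b0pos by (simp add: P1_def)
  also have "u (a0 + Suc i, b0 - 1) = 0" using u_zero b0pos by simp
  also have "u (a0 + i, b0) = W i 0 * Pi i 0 / W 0 0" using 2 by simp
  finally have "u (a0 + Suc i, b0) = (W i 0 * P1 i 0) * Pi i 0 / W 0 0" by simp
  also have "... = (W (Suc i) 0 * P1 (Suc i) 0) * Pi i 0 / W 0 0" by (simp only: WP1)
  finally show ?case by simp
next
  case (3 j)
  have "u (a0, b0 + Suc j) = u (a0 - 1, b0 + Suc j) * p 1 (a0 - 1, b0 + Suc j) + u (a0, b0 + j) * P2 0 j"
    using u_rec[of a0 "b0 + Suc j" j] a0pos b0pos by (simp add: P2_def)
  also have "u (a0 - 1, b0 + Suc j) = 0" using u_zero a0pos by simp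
  also have "u (a0, b0 + j) = W 0 j * Pi 0 j / W 0 0" using 3 by simp
  finally have "u (a0, b0 + Suc j) = (W 0 j * P2 0 j) * Pi 0 j / W 0 0" by simp
  also have "... = (W 0 (Suc j) * P2 0 (Suc j)) * Pi 0 j / W 0 0" by (simp only: WP2)
  finally show ?case by simp
next
  case (4 i j)
  have "u (a0 + Suc i, b0 + Suc j) = u (a0 + i, b0 + Suc j) * P1 i (Suc j) + u (a0 + Suc i, b0 + j) * P2 (Suc i) j"
    using u_rec[of "a0 + Suc i" "b0 + Suc j" "Suc (i + j)"] a0pos b0pos by (simp add: P1_def P2_def)
  also have "... = (W i (Suc j) * P1 i (Suc j)) * Pi i (Suc j) / W 0 0 + (W (Suc i) j * P2 (Suc i) j) * Pi (Suc i) j / W 0 0"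
    using 4 by (simp add: algebra_simps)
  also have "... = (W (Suc i) (Suc j) * P1 (Suc i) (Suc j)) * Pi i (Suc j) / W 0 0 + (W (Suc i) (Suc j) * P2 (Suc i) (Suc j)) * Pi (Suc i) j / W 0 0"
    by (simp only: WP1 WP2)
  also have "... = W (Suc i) (Suc j) * Pi (Suc i) (Suc j) / W 0 0" by (simp add: algebra_simps add_divide_distrib)
  finally show ?case .
qed

lemma p1_formula: "p 1 (a, b) = F1 a / (F1 a + F2 b)" unfolding p_def urn_p_def by simp
lemma p2_formula: "p 2 (a, b) = F2 b / (F1 a + F2 b)" unfolding p_def urn_p_def by simp

lemma p_le1: "p i s \<le> 1"
  using p_sum[of s] p_nonneg[of 1 s] p_nonneg[of 2 s] unfolding p_def urn_p_def
  by (cases "i = 1") auto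

lemma exp_le_inv: "(x::real) \<ge> 0 \<Longrightarrow> exp (-x) \<le> 1 / (1 + x)"
  using exp_ge_add_one_self[of x] by (simp add: exp_minus field_simps)

lemma p1_ge: assumes "a \<ge> 1" shows "p 1 (a, b) \<ge> exp (-(F2 b / F1 a))"
proof -
  have f1: "F1 a > 0" using F1_pos assms by simp
  have f2: "F2 b > 0" using F2_pos by simp
  have "p 1 (a, b) = 1 / (1 + F2 b / F1 a)" unfolding p1_formula using f1 f2 by (simp add: field_simps)
  then show ?thesis using exp_le_inv[of "F2 b / F1 a"] f1 f2 by simp
qed

lemma p2_ge: assumes "a \<ge> 1" shows "p 2 (a, b) \<ge> exp (-(F1 a / F2 b))"
proof -
  have f1: "F1 a > 0" using F1_pos assms by simp
  have f2: "F2 b > 0" using F2_pos by simp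
  have "p 2 (a, b) = 1 / (1 + F1 a / F2 b)" unfolding p2_formula using f1 f2 by (simp add: field_simps)
  then show ?thesis using exp_le_inv[of "F1 a / F2 b"] f1 f2 by simp
qed

lemma invF1: "k \<ge> 1 \<Longrightarrow> 1 / F1 k = real k powr (-\<beta>1)"
  unfolding F1_def by (simp add: powr_minus_divide)

lemma Pi_bounds: "0 \<le> Pi i j \<and> Pi i j \<le> 1"
proof (induction i j rule: Pi.induct)
  case (4 i j)
  have s: "P1 (Suc i) (Suc j) + P2 (Suc i) (Suc j) = 1" unfolding P1_def P2_def by (rule p_sum)
  have n: "P1 (Suc i) (Suc j) \<ge> 0" "P2 (Suc i) (Suc j) \<ge> 0" unfolding P1_def P2_def by (rule p_nonneg)+
  have "P1 (Suc i) (Suc j) * Pi i (Suc j) + P2 (Suc i) (Suc j) * Pi (Suc i) j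
      \<le> P1 (Suc i) (Suc j) * 1 + P2 (Suc i) (Suc j) * 1"
    using 4 n by (intro add_mono mult_left_mono) auto
  then show ?case using 4 n s by simp
qed (auto simp: P1_def P2_def p_nonneg p_le1 intro!: mult_le_one)

definition Z1 :: real where "Z1 = \<beta>1 / (\<beta>1 - 1)"
definition Zg :: real where "Zg = 1 / (1 - exp (-\<beta>2))"

lemma sumF1_bound: "a \<ge> 1 \<Longrightarrow> (\<Sum>k<n. 1 / F1 (a + k)) \<le> Z1 * real a powr (1 - \<beta>1)"
proof -
  assume a: "a \<ge> 1"
  have "(\<Sum>k<n. 1 / F1 (a + k)) = (\<Sum>k<n. (real a + real k) powr (-\<beta>1))"
    using a by (intro sum.cong refl) (simp add: invF1)
  also have "... \<le> Z1 * real a powr (1 - \<beta>1)" unfolding Z1_def using a b1 by (intro tail_bound) auto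
  finally show ?thesis .
qed

lemma Z1_pos: "Z1 > 0" unfolding Z1_def using b1 by simp
lemma Zg_pos: "Zg > 0" unfolding Zg_def using b2 by simp

lemma sumF1_bound1: "(\<Sum>k<n. 1 / F1 (a0 + 1 + k)) \<le> Z1"
proof -
  have "(\<Sum>k<n. 1 / F1 (a0 + 1 + k)) \<le> Z1 * real (a0 + 1) powr (1 - \<beta>1)" by (rule sumF1_bound) simp
  also have "... \<le> Z1 * 1"
  proof (intro mult_left_mono)
    show "real (a0 + 1) powr (1 - \<beta>1) \<le> 1" using powr_mono[of "1 - \<beta>1" 0 "real (a0 + 1)"] b1 by simp
  qed (use Z1_pos in auto)
  finally show ?thesis by simp
qed

lemma sumF2_bound: "(\<Sum>k<n. 1 / F2 (b + k)) \<le> Zg"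
proof -
  have "(\<Sum>k<n. 1 / F2 (b + k)) \<le> (\<Sum>k<n. exp (-\<beta>2) ^ k)"
  proof (intro sum_mono)
    fix k
    have "1 / F2 (b + k) = exp (-(\<beta>2 * real (b + k)))" unfolding F2_def by (simp add: exp_minus inverse_eq_divide)
    also have "... \<le> exp (-(\<beta>2 * real k))" using b2 by simp
    also have "... = exp (-\<beta>2) ^ k" by (simp add: exp_of_nat_mult[symmetric] mult.commute)
    finally show "1 / F2 (b + k) \<le> exp (-\<beta>2) ^ k" .
  qed
  also have "... \<le> Zg" unfolding Zg_def using b2 by (intro geo_bound) auto
  finally show ?thesis .
qed

lemma Pi_row: "Pi i 0 \<ge> exp (-(F2 b0 * (\<Sum>k<i. 1 / F1 (a0 + 1 + k))))"
proof (induction i)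
  case (Suc i)
  have "exp (-(F2 b0 * (\<Sum>k<Suc i. 1 / F1 (a0 + 1 + k))))
      = exp (-(F2 b0 / F1 (a0 + Suc i))) * exp (-(F2 b0 * (\<Sum>k<i. 1 / F1 (a0 + 1 + k))))"
    by (simp add: exp_add[symmetric] algebra_simps)
  also have "... \<le> P1 (Suc i) 0 * Pi i 0"
  proof (rule mult_mono)
    show "exp (-(F2 b0 / F1 (a0 + Suc i))) \<le> P1 (Suc i) 0" unfolding P1_def using a0pos p1_ge[of "a0 + Suc i" b0] by simp
    show "0 \<le> P1 (Suc i) 0" unfolding P1_def by (rule p_nonneg)
  qed (use Suc in auto)
  finally show ?case by simp
qed simp

lemma Pi_col: "Pi 0 j \<ge> exp (-(F1 a0 * (\<Sum>k<j. 1 / F2 (b0 + 1 + k))))"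
proof (induction j)
  case (Suc j)
  have "exp (-(F1 a0 * (\<Sum>k<Suc j. 1 / F2 (b0 + 1 + k))))
      = exp (-(F1 a0 / F2 (b0 + Suc j))) * exp (-(F1 a0 * (\<Sum>k<j. 1 / F2 (b0 + 1 + k))))"
    by (simp add: exp_add[symmetric] algebra_simps)
  also have "... \<le> P2 0 (Suc j) * Pi 0 j"
  proof (rule mult_mono)
    show "exp (-(F1 a0 / F2 (b0 + Suc j))) \<le> P2 0 (Suc j)" unfolding P2_def using a0pos p2_ge[of a0 "b0 + Suc j"] by simp
    show "0 \<le> P2 0 (Suc j)" unfolding P2_def by (rule p_nonneg)
  qed (use Suc in auto)
  finally show ?case by simp
qed simp

definition \<sigma> :: real where "\<sigma> = min (exp (-(F2 b0 * Z1))) (exp (-(F1 a0 * Zg)))"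

lemma sigma_pos: "\<sigma> > 0" unfolding \<sigma>_def by simp

lemma Pi_lower: "Pi i j \<ge> \<sigma>"
proof (induction i j rule: Pi.induct)
  case 1
  then show ?case unfolding \<sigma>_def using Z1_pos F2_pos[of b0] Zg_pos F1_nonneg[of a0] by (simp add: min_def)
next
  case (2 i)
  have "\<sigma> \<le> exp (-(F2 b0 * Z1))" unfolding \<sigma>_def by simp
  also have "... \<le> exp (-(F2 b0 * (\<Sum>k<Suc i. 1 / F1 (a0 + 1 + k))))"
    using sumF1_bound1[of "Suc i"] F2_pos[of b0] by (simp add: mult_left_mono)
  also have "... \<le> Pi (Suc i) 0" by (rule Pi_row)
  finally show ?case .
next
  case (3 j)
  have "\<sigma> \<le> exp (-(F1 a0 * Zg))" unfolding \<sigma>_def by simp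
  also have "... \<le> exp (-(F1 a0 * (\<Sum>k<Suc j. 1 / F2 (b0 + 1 + k))))"
    using sumF2_bound[where n="Suc j" and b="b0 + 1"] F1_nonneg[of a0] by (simp add: mult_left_mono)
  also have "... \<le> Pi 0 (Suc j)" by (rule Pi_col)
  finally show ?case .
next
  case (4 i j)
  have s: "P1 (Suc i) (Suc j) + P2 (Suc i) (Suc j) = 1" unfolding P1_def P2_def by (rule p_sum)
  have n: "P1 (Suc i) (Suc j) \<ge> 0" "P2 (Suc i) (Suc j) \<ge> 0" unfolding P1_def P2_def by (rule p_nonneg)+
  have "P1 (Suc i) (Suc j) * \<sigma> + P2 (Suc i) (Suc j) * \<sigma>
      \<le> P1 (Suc i) (Suc j) * Pi i (Suc j) + P2 (Suc i) (Suc j) * Pi (Suc i) j"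
    using 4 n by (intro add_mono mult_left_mono) auto
  then show ?case using s by (simp add: distrib_right[symmetric])
qed

lemma W00_pos: "W 0 0 > 0"
  unfolding W_def using F1_pos[of a0] F2_pos[of b0] a0pos by (simp add: add_pos_pos)

lemma measure_G2: "measure M (G m L) =
   (\<Sum>j\<le>m. Pi (m - j) j / (W 0 0 * F1 (a0 + (m - j))) * Q L (a0 + (m - j)) (b0 + j + 1))"
proof -
  have "measure M (G m L) = (\<Sum>j\<le>m. u (a0 + (m - j), b0 + j) * gL L (a0 + (m - j), b0 + j))"
    unfolding measure_G level_sum ..
  also have "... = (\<Sum>j\<le>m. Pi (m - j) j / (W 0 0 * F1 (a0 + (m - j))) * Q L (a0 + (m - j)) (b0 + j + 1))"
  proof (intro sum.cong refl)
    fix j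
    have "u (a0 + (m - j), b0 + j) * gL L (a0 + (m - j), b0 + j)
        = (W (m - j) j * P2 (m - j) j) * Pi (m - j) j / W 0 0 * Q L (a0 + (m - j)) (b0 + j + 1)"
      unfolding u_W gL_def P2_def by simp
    also have "... = Pi (m - j) j / (W 0 0 * F1 (a0 + (m - j))) * Q L (a0 + (m - j)) (b0 + j + 1)"
      unfolding WP2 by simp
    finally show "u (a0 + (m - j), b0 + j) * gL L (a0 + (m - j), b0 + j) =
      Pi (m - j) j / (W 0 0 * F1 (a0 + (m - j))) * Q L (a0 + (m - j)) (b0 + j + 1)" .
  qed
  finally show ?thesis .
qed

lemma Q_nonneg: "Q L a c \<ge> 0" unfolding Q_def by (intro prod_nonneg) (auto intro: p_nonneg)
lemma Q_le1: "Q L a c \<le> 1" unfolding Q_def by (intro prod_le_1) (auto intro: p_nonneg p_le1)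

lemma Q_lower: assumes a: "a \<ge> 1" shows "Q L a c \<ge> exp (-(F2 c * (Z1 * real a powr (1 - \<beta>1))))"
proof -
  have "exp (-(F2 c * (Z1 * real a powr (1 - \<beta>1)))) \<le> exp (-(F2 c * (\<Sum>k<Suc L. 1 / F1 (a + k))))"
    using sumF1_bound[OF a, of "Suc L"] F2_pos[of c] by (simp add: mult_left_mono)
  also have "... = exp (\<Sum>k<Suc L. -(F2 c / F1 (a + k)))"
    by (simp add: sum_distrib_left sum_negf del: sum.lessThan_Suc)
  also have "... = (\<Prod>k<Suc L. exp (-(F2 c / F1 (a + k))))"
    by (rule exp_sum) simp
  also have "... \<le> Q L a c" unfolding Q_def
    using a p1_ge by (intro prod_mono) (auto simp del: One_nat_def)
  finally show ?thesis .
qed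

lemma Q_upper: assumes a: "a \<ge> 1" and L: "L \<ge> a"
  shows "Q L a c \<le> F1 (2 * a) / (real (Suc a) * F2 c)"
proof -
  let ?r = "F1 (2 * a) / (F1 (2 * a) + F2 c)"
  let ?x = "F2 c / F1 (2 * a)"
  have f1: "F1 (2 * a) > 0" using F1_pos a by simp
  have f2: "F2 c > 0" by (rule F2_pos)
  have sub: "{..<Suc a} \<subseteq> {..<Suc L}" using L by auto
  have "Q L a c = (\<Prod>k\<in>{..<Suc L} - {..<Suc a}. p 1 (a + k, c)) * (\<Prod>k<Suc a. p 1 (a + k, c))"
    unfolding Q_def by (rule prod.subset_diff[OF sub]) simp
  also have "... \<le> (\<Prod>k<Suc a. p 1 (a + k, c))"
    by (intro mult_left_le_one_le prod_le_1 prod_nonneg) (auto intro: p_nonneg p_le1)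
  also have "... \<le> (\<Prod>k<Suc a. ?r)"
  proof (intro prod_mono conjI)
    fix k assume k: "k \<in> {..<Suc a}"
    show "0 \<le> p 1 (a + k, c)" by (rule p_nonneg)
    have "F1 (a + k) \<le> F1 (2 * a)" unfolding F1_def using k b1 by (intro powr_mono2) auto
    moreover have "F1 (a + k) \<ge> 0" by (rule F1_nonneg)
    ultimately show "p 1 (a + k, c) \<le> ?r" unfolding p1_formula using f2
      by (intro frac_mono) auto
  qed
  also have "... = ?r ^ Suc a" by simp
  also have "?r = 1 / (1 + ?x)" using f1 f2 by (simp add: field_simps)
  also have "(1 / (1 + ?x)) ^ Suc a = 1 / (1 + ?x) ^ Suc a" by (simp add: power_one_over)
  also have "... \<le> 1 / (1 + real (Suc a) * ?x)"
  proof -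
    have xpos: "?x > 0" using f1 f2 by simp
    have B: "1 + real (Suc a) * ?x \<le> (1 + ?x) ^ Suc a"
      by (rule Bernoulli_inequality) (use xpos in simp)
    have "0 < real (Suc a) * ?x" using xpos by (intro mult_pos_pos) auto
    then have "0 < 1 + real (Suc a) * ?x" by linarith
    then show ?thesis using B by (intro divide_left_mono) auto
  qed
  also have "... \<le> 1 / (real (Suc a) * ?x)"
    by (rule inv_1p_le) (use f1 f2 in simp)
  also have "... = F1 (2 * a) / (real (Suc a) * F2 c)" using f1 f2 by simp
  finally show ?thesis .
qed

end


context urn begin
lemma snd_const:
  assumes "\<forall>j\<ge>N. X \<omega> (Suc j) = urn_step 1 (X \<omega> j)" "k \<ge> N"
  shows "snd (X \<omega> k) = snd (X \<omega> N)"
  using assms(2)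
proof (induction k rule: dec_induct)
  case (step k)
  then show ?case using assms(1)[rule_format, of k] by (simp add: urn_step_def)
qed simp

lemma Nmon_Ginf: "Nmon_eq M X (Suc (Suc m)) \<inter> sMon1 M X = Ginf m"
proof (intro equalityI subsetI)
  fix \<omega> assume w: "\<omega> \<in> Nmon_eq M X (Suc (Suc m)) \<inter> sMon1 M X"
  have w1: "\<omega> \<in> Nmon_eq M X (Suc (Suc m))" and w2: "\<omega> \<in> sMon1 M X" using w by blast+
  have sp: "\<omega> \<in> space M" and ex: "\<exists>i\<in>{1,2}. mono_from X \<omega> (Suc (Suc m)) i"
    and nk: "\<And>k. 1 \<le> k \<Longrightarrow> k < Suc (Suc m) \<Longrightarrow> \<not> (\<exists>i\<in>{1,2}. mono_from X \<omega> k i)"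
    using w1 unfolding Nmon_eq_def by blast+
  from ex obtain i where i: "i \<in> {1,2}" and mf: "mono_from X \<omega> (Suc (Suc m)) i" by blast
  from w2 obtain N where N: "\<forall>n\<ge>N. snd (X \<omega> n) = snd (X \<omega> N)" unfolding sMon1_def by blast
  have i1: "i = 1"
  proof (rule ccontr)
    assume "i \<noteq> 1"
    then have i2: "i = 2" using i by blast
    define k where "k = Suc (max N (Suc (Suc m)))"
    have "k \<ge> Suc (Suc m)" unfolding k_def by simp
    then have "X \<omega> k = urn_step 2 (X \<omega> (k - 1))" using mf[unfolded mono_from_def, rule_format, of k] i2 by simp
    then have "snd (X \<omega> k) = snd (X \<omega> (k - 1)) + 1" by (simp add: urn_step_def)
    moreover have "k \<ge> N" "k - 1 \<ge> N" unfolding k_def by simp_all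
    then have "snd (X \<omega> k) = snd (X \<omega> N)" "snd (X \<omega> (k - 1)) = snd (X \<omega> N)"
      using N[rule_format, of k] N[rule_format, of "k - 1"] by simp_all
    ultimately show False by simp
  qed
  have all: "X \<omega> (Suc j) = urn_step 1 (X \<omega> j)" if "j \<ge> Suc m" for j
  proof -
    have "X \<omega> (Suc j) = urn_step 1 (X \<omega> (Suc j - 1))" using mf[unfolded mono_from_def, rule_format, of "Suc j"] i1 that by simp
    then show ?thesis by simp
  qed
  have "X \<omega> (Suc m) \<noteq> urn_step 1 (X \<omega> m)"
  proof
    assume h: "X \<omega> (Suc m) = urn_step 1 (X \<omega> m)"
    have "mono_from X \<omega> (Suc m) 1" unfolding mono_from_def
    proof (intro allI impI)
      fix k assume k: "Suc m \<le> k"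
      show "X \<omega> k = urn_step 1 (X \<omega> (k - 1))"
      proof (cases "k = Suc m")
        case True then show ?thesis using h by simp
      next
        case False
        then obtain j where "k = Suc j" "j \<ge> Suc m" using k by (cases k) auto
        then show ?thesis using all[of j] by simp
      qed
    qed
    then show False using nk[of "Suc m"] by simp
  qed
  then have "\<omega> \<notin> S1 m" unfolding S1_def by blast
  moreover have "\<omega> \<in> S1 j" if "j \<ge> Suc m" for j unfolding S1_def using sp all that by blast
  ultimately show "\<omega> \<in> Ginf m" unfolding Ginf_def using sp by blast
next
  fix \<omega> assume w: "\<omega> \<in> Ginf m"
  then have sp: "\<omega> \<in> space M" and nS: "\<omega> \<notin> S1 m" and all: "\<And>j. j \<ge> Suc m \<Longrightarrow> \<omega> \<in> S1 j"
    unfolding Ginf_def by auto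
  have all': "\<forall>j\<ge>Suc m. X \<omega> (Suc j) = urn_step 1 (X \<omega> j)" using all unfolding S1_def by blast
  have nS': "X \<omega> (Suc m) \<noteq> urn_step 1 (X \<omega> m)" using nS sp unfolding S1_def by blast
  have mf: "mono_from X \<omega> (Suc (Suc m)) 1" unfolding mono_from_def
  proof (intro allI impI)
    fix k assume "Suc (Suc m) \<le> k"
    then obtain j where "k = Suc j" "j \<ge> Suc m" by (cases k) auto
    then show "X \<omega> k = urn_step 1 (X \<omega> (k - 1))" using all'[rule_format, of j] by simp
  qed
  have nm: "\<not> mono_from X \<omega> k i" if k: "1 \<le> k" "k < Suc (Suc m)" and i: "i \<in> {1,2}" for k i
  proof (cases "i = 1")
    case True
    have "Suc m \<ge> k" using k by simp
    then show ?thesis unfolding mono_from_def using True nS' by (intro notI) (drule spec[of _ "Suc m"], simp)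
  next
    case False
    then have i2: "i = 2" using i by blast
    have e: "X \<omega> (Suc (Suc m)) = urn_step 1 (X \<omega> (Suc m))" using all'[rule_format, of "Suc m"] by simp
    have ne: "urn_step 1 (X \<omega> (Suc m)) \<noteq> urn_step 2 (X \<omega> (Suc m))" by (simp add: urn_step_def)
    have "Suc (Suc m) \<ge> k" using k by simp
    then show ?thesis unfolding mono_from_def using i2 e ne by (intro notI) (drule spec[of _ "Suc (Suc m)"], simp)
  qed
  have "\<forall>n\<ge>Suc m. snd (X \<omega> n) = snd (X \<omega> (Suc m))" using snd_const[OF all'] by blast
  then have "\<omega> \<in> sMon1 M X" unfolding sMon1_def using sp by blast
  moreover have "\<omega> \<in> Nmon_eq M X (Suc (Suc m))"
    unfolding Nmon_eq_def using sp mf nm by (simp add: Bex_def) blast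
  ultimately show "\<omega> \<in> Nmon_eq M X (Suc (Suc m)) \<inter> sMon1 M X" by blast
qed

lemma Ginf_G: "Ginf m = (\<Inter>L. G m L)"
proof (rule set_eqI)
  fix x
  have "x \<in> Ginf m \<longleftrightarrow> x \<in> space M \<and> x \<notin> S1 m \<and> (\<forall>j. Suc m \<le> j \<longrightarrow> x \<in> S1 j)"
    unfolding Ginf_def by auto
  also have "... \<longleftrightarrow> (\<forall>L. x \<in> space M \<and> x \<notin> S1 m \<and> (\<forall>j. Suc m \<le> j \<and> j \<le> Suc m + L \<longrightarrow> x \<in> S1 j))"
  proof
    assume h: "\<forall>L. x \<in> space M \<and> x \<notin> S1 m \<and> (\<forall>j. Suc m \<le> j \<and> j \<le> Suc m + L \<longrightarrow> x \<in> S1 j)"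
    have "x \<in> S1 j" if "Suc m \<le> j" for j using h[rule_format, of j] that by simp
    then show "x \<in> space M \<and> x \<notin> S1 m \<and> (\<forall>j. Suc m \<le> j \<longrightarrow> x \<in> S1 j)" using h by simp
  qed simp
  also have "... \<longleftrightarrow> x \<in> (\<Inter>L. G m L)"
    unfolding G_def by auto
  finally show "x \<in> Ginf m \<longleftrightarrow> x \<in> (\<Inter>L. G m L)" .
qed

lemma Ginf_le_G: "measure M (Ginf m) \<le> measure M (G m L)"
proof -
  interpret prob_space M by (rule PS)
  show ?thesis using G_sets by (intro finite_measure_mono) (auto simp: Ginf_G)
qed

lemma Ginf_ge: assumes "\<And>L. c \<le> measure M (G m L)" shows "c \<le> measure M (Ginf m)"
proof -
  interpret prob_space M by (rule PS)
  have "(\<lambda>L. measure M (G m L)) \<longlonglongrightarrow> measure M (\<Inter>L. G m L)"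
    by (rule finite_Lim_measure_decseq) (auto simp: decseq_def G_def intro: G_sets)
  then show ?thesis unfolding Ginf_G using assms by (intro LIMSEQ_le_const) auto
qed
end 

context urn begin

lemma geo_min:
  assumes A: "A \<ge> 1"
  shows "(\<Sum>j<n. min 1 (A * exp (-\<beta>2 * real j))) \<le> ln A / \<beta>2 + 1 + Zg"
proof -
  define f where "f j = min 1 (A * exp (-\<beta>2 * real j))" for j
  define J where "J = nat \<lceil>ln A / \<beta>2\<rceil>"
  have lnA: "ln A \<ge> 0" using A by simp
  have x0: "ln A / \<beta>2 \<ge> 0" using lnA b2 by simp
  have J1: "real J \<le> ln A / \<beta>2 + 1" unfolding J_def
    using of_int_ceiling_le_add_one[of "ln A / \<beta>2"] x0 by simp
  have "ln A / \<beta>2 \<le> real J" unfolding J_def using le_of_int_ceiling[of "ln A / \<beta>2"] x0 by simp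
  then have J2: "ln A \<le> \<beta>2 * real J" using b2 by (simp add: pos_divide_le_eq mult.commute)
  have AJ: "A * exp (-\<beta>2 * real J) \<le> 1"
  proof -
    have "A = exp (ln A)" using A by simp
    also have "... \<le> exp (\<beta>2 * real J)" using J2 by simp
    finally show ?thesis by (simp add: exp_minus field_simps)
  qed
  have f0: "f j \<ge> 0" for j unfolding f_def using A by simp
  have "(\<Sum>j<n. f j) \<le> (\<Sum>j<J + n. f j)" using f0 by (intro sum_mono2) auto
  also have "... = (\<Sum>j\<in>{0..<J}. f j) + (\<Sum>j\<in>{J..<J + n}. f j)"
    by (simp add: sum.atLeastLessThan_concat atLeast0LessThan[symmetric])
  also have "(\<Sum>j\<in>{0..<J}. f j) \<le> (\<Sum>j\<in>{0..<J}. 1)" unfolding f_def by (intro sum_mono) simp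
  also have "(\<Sum>j\<in>{J..<J + n}. f j) = (\<Sum>i<n. f (i + J))"
    using sum.shift_bounds_nat_ivl[of f 0 J n] by (simp add: add.commute atLeast0LessThan)
  also have "... \<le> (\<Sum>i<n. exp (-\<beta>2) ^ i)"
  proof (intro sum_mono)
    fix i
    have "f (i + J) \<le> A * exp (-\<beta>2 * real (i + J))" unfolding f_def by simp
    also have "... = (A * exp (-\<beta>2 * real J)) * exp (-\<beta>2 * real i)"
      by (simp add: algebra_simps exp_add[symmetric])
    also have "... \<le> 1 * exp (-\<beta>2 * real i)" using AJ by (intro mult_right_mono) auto
    also have "... = exp (-\<beta>2) ^ i" by (simp add: exp_of_nat_mult[symmetric] mult.commute)
    finally show "f (i + J) \<le> exp (-\<beta>2) ^ i" .
  qed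
  also have "... \<le> Zg" unfolding Zg_def using b2 by (intro geo_bound) auto
  finally have "(\<Sum>j<n. f j) \<le> real J + Zg" by simp
  then show ?thesis using J1 unfolding f_def by linarith
qed


lemma F1_double: "F1 (2 * a) = 2 powr \<beta>1 * F1 a"
  unfolding F1_def by (simp add: powr_mult)

lemma term_upper:
  assumes a: "a \<ge> 1" "a \<le> N" and ac: "a + c = Suc N" and q0: "0 \<le> q" and q1: "q \<le> 1"
    and q2: "q \<le> F1 (2 * a) / (real (Suc a) * F2 c)"
  shows "q / F1 a \<le> 2 powr \<beta>1 * (real N powr (-\<beta>1) * min 1 (2 * real N powr (\<beta>1 - 1) * exp (-\<beta>2 * real c)))
            + 2 powr \<beta>1 * exp (-\<beta>2 * real N / 2)"
proof -
  have fa: "F1 a > 0" using F1_pos a by simp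
  have f2: "F2 c > 0" by (rule F2_pos)
  have N1: "real N \<ge> 1" using a by simp
  have q2': "q / F1 a \<le> 2 powr \<beta>1 / (real (Suc a) * F2 c)"
  proof -
    have "q / F1 a \<le> (F1 (2 * a) / (real (Suc a) * F2 c)) / F1 a" using q2 fa by (intro divide_right_mono) auto
    also have "... = 2 powr \<beta>1 / (real (Suc a) * F2 c)" unfolding F1_double using fa by simp
    finally show ?thesis .
  qed
  have q1': "q / F1 a \<le> 1 / F1 a" using q1 fa by (intro divide_right_mono) auto
  have E0: "0 \<le> 2 powr \<beta>1 * exp (-\<beta>2 * real N / 2)" by simp
  have M0: "0 \<le> 2 powr \<beta>1 * (real N powr (-\<beta>1) * min 1 (2 * real N powr (\<beta>1 - 1) * exp (-\<beta>2 * real c)))"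
    by simp
  show ?thesis
  proof (cases "2 * a \<ge> N")
    case True
    have h1: "1 / F1 a \<le> 2 powr \<beta>1 * real N powr (-\<beta>1)"
    proof -
      have "(real N / 2) powr \<beta>1 \<le> real a powr \<beta>1" using True b1 by (intro powr_mono2) auto
      then have "real N powr \<beta>1 / 2 powr \<beta>1 \<le> F1 a" unfolding F1_def by (simp add: powr_divide)
      then have "real N powr \<beta>1 \<le> 2 powr \<beta>1 * F1 a" by (simp add: divide_le_eq mult.commute)
      then have "1 / F1 a \<le> 2 powr \<beta>1 / real N powr \<beta>1" using fa N1
        by (simp add: divide_simps mult.commute)
      then show ?thesis by (simp add: powr_minus_divide)
    qed
    have h2: "2 powr \<beta>1 / (real (Suc a) * F2 c) \<le> 2 powr \<beta>1 * (real N powr (-\<beta>1) * (2 * real N powr (\<beta>1 - 1) * exp (-\<beta>2 * real c)))"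
    proof -
      have e: "real N powr (-\<beta>1) * real N powr (\<beta>1 - 1) = 1 / real N"
      proof -
        have "real N powr (-\<beta>1) * real N powr (\<beta>1 - 1) = real N powr (-\<beta>1 + (\<beta>1 - 1))"
          by (rule powr_add[symmetric])
        also have "... = real N powr (-1)" by simp
        also have "... = 1 / real N" using N1 by (simp add: powr_minus_divide)
        finally show ?thesis .
      qed
      have ec: "exp (-\<beta>2 * real c) = 1 / F2 c" unfolding F2_def by (simp add: exp_minus inverse_eq_divide)
      have "real N \<le> 2 * real (Suc a)" using True by simp
      then have "1 / real (Suc a) \<le> 2 / real N" using N1 by (simp add: divide_simps)
      then have "2 powr \<beta>1 * (1 / real (Suc a)) / F2 c \<le> 2 powr \<beta>1 * (2 / real N) / F2 c"
        using f2 by (intro divide_right_mono mult_left_mono) auto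
      then have "2 powr \<beta>1 / (real (Suc a) * F2 c) \<le> 2 powr \<beta>1 * ((2 / real N) / F2 c)"
        by simp
      also have "... = 2 powr \<beta>1 * ((real N powr (-\<beta>1) * real N powr (\<beta>1 - 1)) * 2 * exp (-\<beta>2 * real c))"
        unfolding e ec by simp
      finally show ?thesis by (simp add: mult_ac)
    qed
    have "q / F1 a \<le> 2 powr \<beta>1 * (real N powr (-\<beta>1) * min 1 (2 * real N powr (\<beta>1 - 1) * exp (-\<beta>2 * real c)))"
    proof (cases "1 \<le> 2 * real N powr (\<beta>1 - 1) * exp (-\<beta>2 * real c)")
      case True then show ?thesis using q1' h1 by simp
    next
      case False then show ?thesis using q2' h2 by simp
    qed
    then show ?thesis using E0 by linarith
  next
    case False
    have c2: "real N / 2 \<le> real c" using False ac by simp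
    have "q / F1 a \<le> 2 powr \<beta>1 / (real (Suc a) * F2 c)" by (rule q2')
    also have "... \<le> 2 powr \<beta>1 / F2 c"
      using f2 by (intro divide_left_mono) (auto intro!: mult_pos_pos)
    also have "... = 2 powr \<beta>1 * exp (-\<beta>2 * real c)" unfolding F2_def by (simp add: exp_minus field_simps)
    also have "... \<le> 2 powr \<beta>1 * exp (-\<beta>2 * real N / 2)" using c2 b2 by simp
    finally show ?thesis using M0 by linarith
  qed
qed

lemma Ginf_upper:
  fixes m :: nat
  defines "N \<equiv> a0 + b0 + m"
  shows "measure M (Ginf m) \<le> (2 powr \<beta>1 * real N powr (-\<beta>1) * (ln (2 * real N powr (\<beta>1 - 1)) / \<beta>2 + 1 + Zg)
            + real (Suc m) * (2 powr \<beta>1 * exp (-\<beta>2 * real N / 2))) / W 0 0"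
proof -
  let ?A = "2 * real N powr (\<beta>1 - 1)"
  let ?B = "\<lambda>j. 2 powr \<beta>1 * (real N powr (-\<beta>1) * min 1 (?A * exp (-\<beta>2 * real (b0 + j + 1))))
            + 2 powr \<beta>1 * exp (-\<beta>2 * real N / 2)"
  have w0: "W 0 0 > 0" by (rule W00_pos)
  have N1: "real N \<ge> 1" unfolding N_def using a0pos by simp
  have A1: "?A \<ge> 1"
  proof -
    have "real N powr (\<beta>1 - 1) \<ge> 1" using N1 b1 by (intro ge_one_powr_ge_zero) auto
    then show ?thesis by simp
  qed
  have "measure M (Ginf m) \<le> measure M (G m N)" by (rule Ginf_le_G)
  also have "... = (\<Sum>j\<le>m. Pi (m - j) j / (W 0 0 * F1 (a0 + (m - j))) * Q N (a0 + (m - j)) (b0 + j + 1))"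
    by (rule measure_G2)
  also have "... \<le> (\<Sum>j\<le>m. ?B j / W 0 0)"
  proof (intro sum_mono)
    fix j assume j: "j \<in> {..m}"
    let ?a = "a0 + (m - j)" and ?c = "b0 + j + 1"
    have a1: "?a \<ge> 1" using a0pos by simp
    have fa: "F1 ?a > 0" using F1_pos a1 by simp
    have qu: "Q N ?a ?c \<le> F1 (2 * ?a) / (real (Suc ?a) * F2 ?c)"
      by (rule Q_upper) (use j a1 in \<open>auto simp: N_def\<close>)
    have q: "Q N ?a ?c / F1 ?a \<le> ?B j"
      by (rule term_upper[OF _ _ _ Q_nonneg Q_le1 qu]) (use j a1 in \<open>auto simp: N_def\<close>)
    have "Pi (m - j) j / (W 0 0 * F1 ?a) * Q N ?a ?c \<le> 1 / (W 0 0 * F1 ?a) * Q N ?a ?c"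
      using Pi_bounds[of "m - j" j] Q_nonneg[of N ?a ?c] w0 fa
      by (intro mult_right_mono divide_right_mono) auto
    also have "... = (Q N ?a ?c / F1 ?a) / W 0 0" by simp
    also have "... \<le> ?B j / W 0 0" using q w0 by (intro divide_right_mono) auto
    finally show "Pi (m - j) j / (W 0 0 * F1 ?a) * Q N ?a ?c \<le> ?B j / W 0 0" .
  qed
  also have "... = (\<Sum>j\<le>m. ?B j) / W 0 0" by (simp add: sum_divide_distrib)
  also have "(\<Sum>j\<le>m. ?B j) = 2 powr \<beta>1 * real N powr (-\<beta>1) * (\<Sum>j\<le>m. min 1 (?A * exp (-\<beta>2 * real (b0 + j + 1))))
       + real (Suc m) * (2 powr \<beta>1 * exp (-\<beta>2 * real N / 2))"
    by (simp add: sum.distrib sum_distrib_left mult.assoc)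
  also have "(\<Sum>j\<le>m. min 1 (?A * exp (-\<beta>2 * real (b0 + j + 1)))) \<le> (\<Sum>j<Suc m. min 1 (?A * exp (-\<beta>2 * real j)))"
    unfolding lessThan_Suc_atMost
  proof (intro sum_mono)
    fix j
    have "exp (-\<beta>2 * real (b0 + j + 1)) \<le> exp (-\<beta>2 * real j)" using b2 by simp
    then show "min 1 (?A * exp (-\<beta>2 * real (b0 + j + 1))) \<le> min 1 (?A * exp (-\<beta>2 * real j))"
      using A1 by (intro min.mono mult_left_mono) auto
  qed
  also have "... \<le> ln ?A / \<beta>2 + 1 + Zg" by (rule geo_min[OF A1])
  finally show ?thesis using w0 by (simp add: divide_right_mono mult_left_mono)
qed

lemma Ginf_lower:
  fixes m J0 :: nat
  defines "N \<equiv> a0 + b0 + m"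
  assumes J0m: "J0 \<le> m"
    and c2: "\<And>j. j \<le> J0 \<Longrightarrow> F2 (b0 + j + 1) * (Z1 * real (a0 + (m - j)) powr (1 - \<beta>1)) \<le> 1"
  shows "\<sigma> / W 0 0 * real (Suc J0) * real N powr (-\<beta>1) * exp (-1) \<le> measure M (Ginf m)"
proof (rule Ginf_ge)
  fix L
  let ?T = "\<lambda>j. Pi (m - j) j / (W 0 0 * F1 (a0 + (m - j))) * Q L (a0 + (m - j)) (b0 + j + 1)"
  let ?c = "\<sigma> / W 0 0 * real N powr (-\<beta>1) * exp (-1)"
  have w0: "W 0 0 > 0" by (rule W00_pos)
  have T0: "?T j \<ge> 0" for j
    using Pi_bounds[of "m - j" j] Q_nonneg[of L] w0 F1_pos[of "a0 + (m - j)"] a0pos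
    by (intro mult_nonneg_nonneg divide_nonneg_pos mult_pos_pos) auto
  have Tj: "?T j \<ge> ?c" if j: "j \<le> J0" for j
  proof -
    let ?a = "a0 + (m - j)"
    have a1: "?a \<ge> 1" using a0pos by simp
    have fa: "F1 ?a > 0" using F1_pos a1 by simp
    have aN: "?a \<le> N" unfolding N_def by simp
    have iF: "real N powr (-\<beta>1) \<le> 1 / F1 ?a"
    proof -
      have "F1 ?a \<le> F1 N" unfolding F1_def using aN b1 by (intro powr_mono2) auto
      then have "1 / F1 N \<le> 1 / F1 ?a" using fa by (intro divide_left_mono) auto
      moreover have "1 / F1 N = real N powr (-\<beta>1)" using aN a1 by (intro invF1) simp
      ultimately show ?thesis by simp
    qed
    have Ql: "exp (-1) \<le> Q L ?a (b0 + j + 1)"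
    proof -
      have "exp (-1) \<le> exp (-(F2 (b0 + j + 1) * (Z1 * real ?a powr (1 - \<beta>1))))" using c2[OF j] by simp
      also have "... \<le> Q L ?a (b0 + j + 1)" by (rule Q_lower[OF a1])
      finally show ?thesis .
    qed
    have "?c \<le> (Pi (m - j) j / W 0 0) * (1 / F1 ?a) * Q L ?a (b0 + j + 1)"
    proof -
      have m1: "\<sigma> / W 0 0 \<le> Pi (m - j) j / W 0 0" using Pi_lower[of "m - j" j] w0 by (intro divide_right_mono) auto
      have m12: "(\<sigma> / W 0 0) * real N powr (-\<beta>1) \<le> (Pi (m - j) j / W 0 0) * (1 / F1 ?a)"
        by (rule mult_mono[OF m1 iF]) (use Pi_bounds[of "m - j" j] w0 in auto)
      show ?thesis by (rule mult_mono[OF m12 Ql]) (use Pi_bounds[of "m - j" j] w0 fa in auto)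
    qed
    moreover have "(Pi (m - j) j / W 0 0) * (1 / F1 ?a) * Q L ?a (b0 + j + 1) = ?T j" by simp
    ultimately show ?thesis by simp
  qed
  have "?c * real (Suc J0) = (\<Sum>j\<le>J0. ?c)" by simp
  also have "... \<le> (\<Sum>j\<le>J0. ?T j)" using Tj by (intro sum_mono) auto
  also have "... \<le> (\<Sum>j\<le>m. ?T j)" using J0m by (intro sum_mono2 T0) auto
  also have "... = measure M (G m L)" by (rule measure_G2[symmetric])
  finally show "\<sigma> / W 0 0 * real (Suc J0) * real N powr (-\<beta>1) * exp (-1) \<le> measure M (G m L)"
    by (simp add: mult_ac)
qed

lemma Ginf_lower2:
  fixes m :: nat
  defines "N \<equiv> a0 + b0 + m" and "\<gamma> \<equiv> (\<beta>1 - 1) / (2 * \<beta>2)"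
  assumes E0: "\<gamma> * ln (real N) + real (a0 + b0) \<le> real N / 2"
    and E2: "Z1 * exp (\<beta>2 * (real b0 + 1)) * 2 powr (\<beta>1 - 1) * real N powr ((1 - \<beta>1) / 2) \<le> 1"
  shows "\<sigma> / W 0 0 * (\<gamma> * ln (real N)) * real N powr (-\<beta>1) * exp (-1) \<le> measure M (Ginf m)"
proof -
  define J0 where "J0 = nat \<lfloor>\<gamma> * ln (real N)\<rfloor>"
  have N1: "real N \<ge> 1" unfolding N_def using a0pos by simp
  have g0: "\<gamma> > 0" unfolding \<gamma>_def using b1 b2 by simp
  have gl0: "\<gamma> * ln (real N) \<ge> 0" using g0 N1 by simp
  have J0le: "real J0 \<le> \<gamma> * ln (real N)" unfolding J0_def using gl0 by simp
  have J0ge: "real (Suc J0) \<ge> \<gamma> * ln (real N)" unfolding J0_def using gl0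
    by (simp add: of_nat_nat) linarith
  have J0m: "J0 \<le> m"
  proof -
    have "real J0 \<le> real m" using J0le E0 N1 unfolding N_def by simp
    then show ?thesis by simp
  qed
  have c2: "F2 (b0 + j + 1) * (Z1 * real (a0 + (m - j)) powr (1 - \<beta>1)) \<le> 1" if j: "j \<le> J0" for j
  proof -
    have jm: "j \<le> m" using j J0m by simp
    have ra: "real (a0 + (m - j)) = real N - real b0 - real j" unfolding N_def using jm by simp
    have "real j \<le> real J0" using j by simp
    moreover have "real (a0 + b0) = real a0 + real b0" by simp
    ultimately have aN: "real (a0 + (m - j)) \<ge> real N / 2" unfolding ra using E0 J0le
      by linarith
    have N2: "real N / 2 > 0" using N1 by simp
    have p1: "real (a0 + (m - j)) powr (1 - \<beta>1) \<le> (real N / 2) powr (1 - \<beta>1)"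
      using aN N2 b1 by (intro powr_mono2') auto
    also have "(real N / 2) powr (1 - \<beta>1) = 2 powr (\<beta>1 - 1) * real N powr (1 - \<beta>1)"
      using N1 by (simp add: powr_divide powr_minus_divide divide_simps powr_add[symmetric])
    finally have p1': "real (a0 + (m - j)) powr (1 - \<beta>1) \<le> 2 powr (\<beta>1 - 1) * real N powr (1 - \<beta>1)" .
    have "F2 (b0 + j + 1) = exp (\<beta>2 * (real b0 + 1)) * exp (\<beta>2 * real j)"
      unfolding F2_def by (simp add: exp_add[symmetric] algebra_simps)
    also have "exp (\<beta>2 * real j) \<le> exp (\<beta>2 * (\<gamma> * ln (real N)))"
      using J0le j b2 by (simp add: mult_left_mono)
    also have "exp (\<beta>2 * (\<gamma> * ln (real N))) = real N powr ((\<beta>1 - 1) / 2)"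
      unfolding \<gamma>_def using N1 b2 by (simp add: powr_def field_simps)
    finally have f2: "F2 (b0 + j + 1) \<le> exp (\<beta>2 * (real b0 + 1)) * real N powr ((\<beta>1 - 1) / 2)"
      by simp
    have "F2 (b0 + j + 1) * (Z1 * real (a0 + (m - j)) powr (1 - \<beta>1))
        \<le> (exp (\<beta>2 * (real b0 + 1)) * real N powr ((\<beta>1 - 1) / 2)) * (Z1 * (2 powr (\<beta>1 - 1) * real N powr (1 - \<beta>1)))"
      using f2 p1' Z1_pos F2_pos[of "b0 + j + 1"] by (intro mult_mono mult_left_mono) auto
    also have "... = Z1 * exp (\<beta>2 * (real b0 + 1)) * 2 powr (\<beta>1 - 1) * (real N powr ((\<beta>1 - 1) / 2) * real N powr (1 - \<beta>1))"
      by (simp add: mult_ac)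
    also have "real N powr ((\<beta>1 - 1) / 2) * real N powr (1 - \<beta>1) = real N powr ((1 - \<beta>1) / 2)"
      by (simp add: powr_add[symmetric] field_simps)
    finally show ?thesis using E2 by simp
  qed
  have "\<sigma> / W 0 0 * (\<gamma> * ln (real N)) * real N powr (-\<beta>1) * exp (-1)
      \<le> \<sigma> / W 0 0 * real (Suc J0) * real N powr (-\<beta>1) * exp (-1)"
    using J0ge sigma_pos W00_pos by (intro mult_right_mono mult_left_mono) auto
  also have "... \<le> measure M (Ginf m)"
    unfolding N_def by (rule Ginf_lower[OF J0m c2]) simp
  finally show ?thesis .
qed
end


lemma asy_upper:
  fixes \<beta>1 \<beta>2 Zg W P d :: real
  assumes "\<beta>1 > 1" "\<beta>2 > 0" "Zg > 0" "W > 0" "P > 0" "d \<ge> 2"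
  shows "(\<lambda>n::nat. (2 powr \<beta>1 * (real n + d - 2) powr (-\<beta>1) * (ln (2 * (real n + d - 2) powr (\<beta>1 - 1)) / \<beta>2 + 1 + Zg)
     + (real n - 1) * (2 powr \<beta>1 * exp (-\<beta>2 * (real n + d - 2) / 2))) / W / P) \<in> O(\<lambda>n. real n powr (-\<beta>1) * ln (real n))"
  using assms by real_asymp
lemma asy_lower:
  fixes \<beta>1 C d :: real
  assumes "\<beta>1 > 1" "C > 0" "d \<ge> 2"
  shows "(\<lambda>n::nat. C * ln (real n + d - 2) * (real n + d - 2) powr (-\<beta>1)) \<in> \<Omega>(\<lambda>n. real n powr (-\<beta>1) * ln (real n))"
  using assms by real_asymp
lemma E0: fixes \<gamma> d b :: real assumes "\<gamma> > 0"
  shows "eventually (\<lambda>n::nat. \<gamma> * ln (real n + d - 2) + b \<le> (real n + d - 2) / 2) at_top"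
  using assms by real_asymp
lemma E2: fixes \<beta>1 K d :: real assumes "\<beta>1 > 1" "K > 0"
  shows "eventually (\<lambda>n::nat. K * (real n + d - 2) powr ((1 - \<beta>1) / 2) \<le> 1) at_top"
  using assms by real_asymp


context urn begin

lemma sMon1_sets: "sMon1 M X \<in> sets M"
  unfolding sMon1_def by (rule test1)

lemma Ginf_sub: "Ginf m \<subseteq> sMon1 M X"
  using Nmon_Ginf[of m] by blast

lemma Ginf_le_S: "measure M (Ginf m) \<le> measure M (sMon1 M X)"
proof -
  interpret prob_space M by (rule PS)
  show ?thesis using Ginf_sub sMon1_sets by (intro finite_measure_mono) auto
qed

lemma main: "(\<lambda>n. cprob M (Nmon_eq M X n) (sMon1 M X)) \<in> \<Theta>(\<lambda>n. real n powr (- \<beta>1) * ln (real n))"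
proof -
  define d where "d = real (a0 + b0)"
  define \<gamma> where "\<gamma> = (\<beta>1 - 1) / (2 * \<beta>2)"
  define K where "K = Z1 * exp (\<beta>2 * (real b0 + 1)) * 2 powr (\<beta>1 - 1)"
  define PSm where "PSm = measure M (sMon1 M X)"
  define f where "f n = cprob M (Nmon_eq M X n) (sMon1 M X)" for n
  define Lo where "Lo n = \<sigma> / W 0 0 * (\<gamma> * ln (real n + d - 2)) * (real n + d - 2) powr (-\<beta>1) * exp (-1)" for n :: nat
  have d2: "d \<ge> 2" unfolding d_def using a0pos b0pos by simp
  have g0: "\<gamma> > 0" unfolding \<gamma>_def using b1 b2 by simp
  have K0: "K > 0" unfolding K_def using Z1_pos by simp
  have w0: "W 0 0 > 0" by (rule W00_pos)
  have fm: "f (Suc (Suc m)) = measure M (Ginf m) / PSm" for m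
    unfolding f_def cprob_def PSm_def Nmon_Ginf ..
  have rN: "real (a0 + b0 + (n - 2)) = real n + d - 2" if "n \<ge> 2" for n
    unfolding d_def using that by simp
  have ev: "eventually (\<lambda>n. n \<ge> 2 \<and> \<gamma> * ln (real n + d - 2) + d \<le> (real n + d - 2) / 2
              \<and> K * (real n + d - 2) powr ((1 - \<beta>1) / 2) \<le> 1) at_top"
    using E0[OF g0, of d d] E2[OF b1 K0, of d] eventually_ge_at_top[of 2]
    by eventually_elim auto
  have low: "Lo n \<le> measure M (Ginf (n - 2))"
    if n: "n \<ge> 2" "\<gamma> * ln (real n + d - 2) + d \<le> (real n + d - 2) / 2"
       "K * (real n + d - 2) powr ((1 - \<beta>1) / 2) \<le> 1" for n
  proof -
    have e0: "\<gamma> * ln (real (a0 + b0 + (n - 2))) + real (a0 + b0) \<le> real (a0 + b0 + (n - 2)) / 2"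
      using n(2) unfolding rN[OF n(1)] d_def .
    have e2: "Z1 * exp (\<beta>2 * (real b0 + 1)) * 2 powr (\<beta>1 - 1) * real (a0 + b0 + (n - 2)) powr ((1 - \<beta>1) / 2) \<le> 1"
      using n(3) unfolding rN[OF n(1)] K_def .
    have "\<sigma> / W 0 0 * (\<gamma> * ln (real (a0 + b0 + (n - 2)))) * real (a0 + b0 + (n - 2)) powr (-\<beta>1) * exp (-1)
        \<le> measure M (Ginf (n - 2))"
      unfolding \<gamma>_def by (rule Ginf_lower2[OF e0[unfolded \<gamma>_def] e2])
    then show ?thesis unfolding Lo_def rN[OF n(1)] .
  qed
  have Lo_pos: "Lo n > 0" if "n \<ge> 2" for n
  proof -
    have "real n + d - 2 > 1" using that d2 by simp
    then show ?thesis unfolding Lo_def using g0 sigma_pos w0 by (auto intro!: mult_pos_pos)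
  qed
  have PS0: "PSm > 0"
  proof -
    obtain n where n: "n \<ge> 2" "\<gamma> * ln (real n + d - 2) + d \<le> (real n + d - 2) / 2"
       "K * (real n + d - 2) powr ((1 - \<beta>1) / 2) \<le> 1"
      using eventually_happens[OF ev] by auto
    have "0 < Lo n" using Lo_pos n by simp
    also have "... \<le> measure M (Ginf (n - 2))" using low n by blast
    also have "... \<le> PSm" unfolding PSm_def by (rule Ginf_le_S)
    finally show ?thesis .
  qed
  define Up where "Up n = (2 powr \<beta>1 * (real n + d - 2) powr (-\<beta>1) * (ln (2 * (real n + d - 2) powr (\<beta>1 - 1)) / \<beta>2 + 1 + Zg)
     + (real n - 1) * (2 powr \<beta>1 * exp (-\<beta>2 * (real n + d - 2) / 2))) / W 0 0 / PSm" for n :: nat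
  have f_up: "f n \<le> Up n" if n: "n \<ge> 2" for n
  proof -
    obtain m where m: "n = Suc (Suc m)" using n by (metis add_2_eq_Suc le_Suc_ex)
    have "f n = measure M (Ginf m) / PSm" unfolding m fm ..
    also have "... \<le> ((2 powr \<beta>1 * real (a0 + b0 + m) powr (-\<beta>1) * (ln (2 * real (a0 + b0 + m) powr (\<beta>1 - 1)) / \<beta>2 + 1 + Zg)
            + real (Suc m) * (2 powr \<beta>1 * exp (-\<beta>2 * real (a0 + b0 + m) / 2))) / W 0 0) / PSm"
      using Ginf_upper[of m] PS0 by (intro divide_right_mono) auto
    also have "... = Up n" unfolding Up_def m d_def by (simp add: algebra_simps)
    finally show ?thesis .
  qed
  have f_nonneg: "f n \<ge> 0" for n unfolding f_def cprob_def by simp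
  have "f \<in> O(Up)"
  proof (rule landau_o.big_mono)
    show "\<forall>\<^sub>F n in sequentially. norm (f n) \<le> norm (Up n)"
      using eventually_ge_at_top[of 2]
    proof eventually_elim
      case (elim n)
      then show ?case using f_up[OF elim] f_nonneg[of n] by simp
    qed
  qed
  also have "Up \<in> O(\<lambda>n. real n powr (- \<beta>1) * ln (real n))"
    unfolding Up_def by (rule asy_upper) (use b1 b2 Zg_pos w0 PS0 d2 in auto)
  finally have fO: "f \<in> O(\<lambda>n. real n powr (- \<beta>1) * ln (real n))" .
  define C where "C = \<sigma> / W 0 0 * \<gamma> * exp (-1) / PSm"
  have C0: "C > 0" unfolding C_def using sigma_pos w0 g0 PS0 by simp
  have "f \<in> \<Omega>(\<lambda>n. C * ln (real n + d - 2) * (real n + d - 2) powr (-\<beta>1))"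
  proof (rule landau_omega.big_mono)
    show "\<forall>\<^sub>F n in sequentially. norm (f n) \<ge> norm (C * ln (real n + d - 2) * (real n + d - 2) powr (-\<beta>1))"
      using ev
    proof eventually_elim
      case (elim n)
      have ge: "real n + d - 2 \<ge> 1" using elim d2 by simp
      have "C * ln (real n + d - 2) * (real n + d - 2) powr (-\<beta>1) = Lo n / PSm"
        unfolding C_def Lo_def by (simp add: field_simps)
      also have "... \<le> measure M (Ginf (n - 2)) / PSm" using low elim PS0 by (intro divide_right_mono) auto
      also have "... = f n"
      proof -
        obtain m where m: "n = Suc (Suc m)" using elim by (metis add_2_eq_Suc le_Suc_ex)
        show ?thesis unfolding m fm by simp
      qed
      finally have "C * ln (real n + d - 2) * (real n + d - 2) powr (-\<beta>1) \<le> f n" .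
      moreover have "C * ln (real n + d - 2) * (real n + d - 2) powr (-\<beta>1) \<ge> 0" using C0 ge by simp
      ultimately show ?case by simp
    qed
  qed
  also have "(\<lambda>n. C * ln (real n + d - 2) * (real n + d - 2) powr (-\<beta>1)) \<in> \<Omega>(\<lambda>n. real n powr (- \<beta>1) * ln (real n))"
    by (rule asy_lower) (use b1 C0 d2 in auto)
  finally have fOm: "f \<in> \<Omega>(\<lambda>n. real n powr (- \<beta>1) * ln (real n))" .
  show ?thesis using fO fOm unfolding f_def by (intro bigthetaI)
qed

end

theorem proposition5:
  fixes M :: "'a measure" and X :: "'a \<Rightarrow> nat \<Rightarrow> nat \<times> nat"
    and \<beta>1 \<beta>2 :: real and x0 :: "nat \<times> nat"
  assumes "\<beta>1 > 1" and "\<beta>2 > 0"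
    and "fst x0 \<ge> 1" and "snd x0 \<ge> 1"
    and "polya_urn M (\<lambda>k. real k powr \<beta>1) (\<lambda>k. exp (\<beta>2 * real k)) x0 X"
  shows "(\<lambda>n. cprob M (Nmon_eq M X n) (sMon1 M X))
           \<in> \<Theta>(\<lambda>n. real n powr (- \<beta>1) * ln (real n))"
proof -
  interpret urn M X \<beta>1 \<beta>2 x0 by unfold_locales (use assms in auto)
  show ?thesis by (rule main)
qed


end
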